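(* Let $g\sim(a,b,\mu)$ be a Bernstein function and $r=r[g]$. For $t>0$ let $\mathcal C_t(z):=\frac{1-e^{-tz}}{tz}$. Then $\mathcal C_t\cdot g\in\mathcal W^+(\mathbb C_+)$ for each $t>0$ and \[\|\mathcal C_t\,g\|_{\mathcal W^+}=2r(t)\qquad(t>0).\]
   Context: A Bernstein function $g\sim(a,b,\mu)$ is $g(z)=a+bz+\int_{(0,\infty)}(1-e^{-sz})\mu(\mathrm ds)$ with $a,b\ge0$, $\mu$ positive Radon on $(0,\infty)$, $\int\frac{s}{1+s}\mu(\mathrm ds)<\infty$ (identified with its holomorphic extension to $\mathbb C_+=\{\operatorname{Re}z>0\}$). Its rate function is $r[g](t):=\frac a2+\frac bt+\int_{(0,\infty)}\min(s/t,1)\,\mu(\mathrm ds)$ for $t>0$. $\mathcal W^+(\mathbb C_+)$ is the Banach algebra of Laplace transforms $\hat\nu(z)=\int_{[0,\infty)}e^{-sz}\nu(\mathrm ds)$ of bounded complex Radon measures $\nu$ on $[0,\infty)$, with $\|\hat\nu\|_{\mathcal W^+}=|\nu|([0,\infty))$. *)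

theory Defs
  imports "HOL-Analysis.Analysis"
begin

definition levy_measure :: "real measure \<Rightarrow> bool" where
  "levy_measure \<mu> \<longleftrightarrow> sets \<mu> = sets borel \<and> emeasure \<mu> {..0} = 0
     \<and> integrable \<mu> (\<lambda>s. s / (1 + s))"

definition bernstein :: "real \<Rightarrow> real \<Rightarrow> real measure \<Rightarrow> complex \<Rightarrow> complex" where
  "bernstein a b \<mu> z = complex_of_real a + complex_of_real b * z
     + (\<integral>s. (1 - exp (- (complex_of_real s * z))) \<partial>\<mu>)"

definition rate :: "real \<Rightarrow> real \<Rightarrow> real measure \<Rightarrow> real \<Rightarrow> real" where
  "rate a b \<mu> t = a / 2 + b / t + (\<integral>s. min (s / t) 1 \<partial>\<mu>)"

definition Cfun :: "real \<Rightarrow> complex \<Rightarrow> complex" where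
  "Cfun t z = (1 - exp (- (complex_of_real t * z))) / (complex_of_real t * z)"

text \<open>A bounded complex Radon measure nu on [0,inf) is represented as nu = f M with M a finite
  positive Borel measure concentrated on [0,inf) and f in L^1(M) (every complex measure has
  this form, e.g. with M = |nu|); its total variation |nu|([0,inf)) is then int |f| dM.
  laplace_repr M f F says that F coincides on the open right half plane with the Laplace
  transform of f M.\<close>
definition laplace_repr :: "real measure \<Rightarrow> (real \<Rightarrow> complex) \<Rightarrow> (complex \<Rightarrow> complex) \<Rightarrow> bool" where
  "laplace_repr M f F \<longleftrightarrow> sets M = sets borel \<and> finite_measure M \<and> emeasure M {..<0} = 0
     \<and> integrable M f
     \<and> (\<forall>z. 0 < Re z \<longrightarrow> F z = (\<integral>s. exp (- (complex_of_real s * z)) * f s \<partial>M))"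

definition total_variation :: "real measure \<Rightarrow> (real \<Rightarrow> complex) \<Rightarrow> real" where
  "total_variation M f = (\<integral>s. norm (f s) \<partial>M)"

end

theory Submission
  imports Defs "HOL-Probability.Probability"
begin

definition msum :: "real measure \<Rightarrow> real measure \<Rightarrow> real measure" where
  "msum A B = measure_of UNIV (sets borel) (\<lambda>X. emeasure A X + emeasure B X)"

lemma msum_sets[simp, measurable_cong]: "sets (msum A B) = sets borel"
  unfolding msum_def using sets.sigma_sets_eq[of borel]
  by (simp add: sets_measure_of_conv)

lemma msum_space[simp]: "space (msum A B) = UNIV"
  unfolding msum_def by (simp add: space_measure_of_conv)

lemma emeasure_msum:
  assumes A: "sets A = sets borel" and B: "sets B = sets borel" and X: "X \<in> sets borel"
  shows "emeasure (msum A B) X = emeasure A X + emeasure B X"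
  unfolding msum_def
proof (rule emeasure_measure_of_sigma)
  show "sigma_algebra UNIV (sets borel)"
    using sets.sigma_algebra_axioms[of borel] by simp
  show "positive (sets borel) (\<lambda>X. emeasure A X + emeasure B X)"
    by (simp add: positive_def)
  show "countably_additive (sets borel) (\<lambda>X. emeasure A X + emeasure B X)"
  proof (rule countably_additiveI)
    fix F :: "nat \<Rightarrow> real set" assume F: "range F \<subseteq> sets borel" "disjoint_family F"
    have "(\<Sum>i. emeasure A (F i)) = emeasure A (\<Union>i. F i)"
      using F A by (intro suminf_emeasure) auto
    moreover have "(\<Sum>i. emeasure B (F i)) = emeasure B (\<Union>i. F i)"
      using F B by (intro suminf_emeasure) auto
    ultimately show "(\<Sum>i. emeasure A (F i) + emeasure B (F i)) = emeasure A (\<Union>i. F i) + emeasure B (\<Union>i. F i)"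
      by (simp add: suminf_add[symmetric])
  qed
qed (use X in auto)

lemma nn_integral_msum:
  assumes A: "sets A = sets borel" and B: "sets B = sets borel"
  and u: "u \<in> borel_measurable borel"
  shows "(\<integral>\<^sup>+x. u x \<partial>msum A B) = (\<integral>\<^sup>+x. u x \<partial>A) + (\<integral>\<^sup>+x. u x \<partial>B)"
  using u
proof (induct rule: borel_measurable_induct)
  case (cong f g)
  have "(\<integral>\<^sup>+x. f x \<partial>msum A B) = (\<integral>\<^sup>+x. g x \<partial>msum A B)"
    using cong(3) by (intro nn_integral_cong) auto
  moreover have "(\<integral>\<^sup>+x. f x \<partial>A) = (\<integral>\<^sup>+x. g x \<partial>A)"
    using cong(3) by (intro nn_integral_cong) auto
  moreover have "(\<integral>\<^sup>+x. f x \<partial>B) = (\<integral>\<^sup>+x. g x \<partial>B)"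
    using cong(3) by (intro nn_integral_cong) auto
  ultimately show ?case using cong(4) by simp
next
  case (set X)
  then show ?case using A B
    by (simp add: emeasure_msum nn_integral_indicator[where M=A] nn_integral_indicator[where M=B])
next
  case (mult u c)
  then show ?case using A B
    by (simp add: nn_integral_cmult[where M=A] nn_integral_cmult[where M=B] nn_integral_cmult distrib_left)
next
  case (add u v)
  then show ?case using A B
    by (simp add: nn_integral_add[where M=A] nn_integral_add[where M=B] nn_integral_add algebra_simps)
next
  case (seq U)
  have mU[measurable]: "\<And>i. U i \<in> borel_measurable borel" using seq by auto
  have incU: "incseq U" using seq by auto
  have e: "\<And>M. sets M = sets borel \<Longrightarrow> (\<integral>\<^sup>+x. (SUP i. U i) x \<partial>M) = (SUP i. \<integral>\<^sup>+x. U i x \<partial>M)"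
  proof -
    fix M :: "real measure" assume sM: "sets M = sets borel"
    have "(\<integral>\<^sup>+x. (SUP i. U i) x \<partial>M) = (\<integral>\<^sup>+x. (SUP i. U i x) \<partial>M)" by (simp only: SUP_apply)
    also have "\<dots> = (SUP i. \<integral>\<^sup>+x. U i x \<partial>M)"
      using incU mU by (intro nn_integral_monotone_convergence_SUP) (simp_all add: measurable_cong_sets[OF sM refl])
    finally show "(\<integral>\<^sup>+x. (SUP i. U i) x \<partial>M) = (SUP i. \<integral>\<^sup>+x. U i x \<partial>M)" .
  qed
  have incA: "incseq (\<lambda>i. \<integral>\<^sup>+x. U i x \<partial>A)" using incU
    by (intro incseq_nn_integral)
  have incB: "incseq (\<lambda>i. \<integral>\<^sup>+x. U i x \<partial>B)" using incU
    by (intro incseq_nn_integral)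
  show ?case
    unfolding e[OF A] e[OF B] e[of "msum A B", OF msum_sets] seq(3) ennreal_SUP_add[OF incA incB] by (rule refl)
qed

lemma char_zero_finite:
  assumes "finite_measure A"
  shows "char A 0 = complex_of_real (measure A (space A))"
  unfolding char_def by (simp add: scaleR_conv_of_real)

lemma fourier_unique:
  assumes fA: "finite_measure A" and fB: "finite_measure B"
    and sA: "sets A = sets borel" and sB: "sets B = sets borel"
    and ch: "\<And>\<omega>. char A \<omega> = char B \<omega>"
  shows "A = B"
proof -
  have spA: "space A = UNIV" using sets_eq_imp_space_eq[OF sA] by simp
  have spB: "space B = UNIV" using sets_eq_imp_space_eq[OF sB] by simp
  define c where "c = measure A UNIV"
  have cB: "measure B UNIV = c"
    using ch[of 0] char_zero_finite[OF fA] char_zero_finite[OF fB] spA spB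
    unfolding c_def by simp
  have c0: "c \<ge> 0" unfolding c_def by simp
  show ?thesis
  proof (cases "c = 0")
    case True
    have eA: "emeasure A UNIV = 0"
      using True fA unfolding c_def by (metis finite_measure.emeasure_eq_measure ennreal_0 spA)
    have eB: "emeasure B UNIV = 0"
      using True cB fB by (metis finite_measure.emeasure_eq_measure ennreal_0 spB)
    show ?thesis
    proof (rule measure_eqI)
      fix X assume "X \<in> sets A"
      have "emeasure A X \<le> emeasure A UNIV" by (metis emeasure_space spA)
      moreover have "emeasure B X \<le> emeasure B UNIV" by (metis emeasure_space spB)
      ultimately show "emeasure A X = emeasure B X" using eA eB by simp
    qed (use sA sB in simp)
  next
    case False
    hence cpos: "c > 0" using c0 by simp
    define A' where "A' = density A (\<lambda>_. ennreal (1/c))"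
    define B' where "B' = density B (\<lambda>_. ennreal (1/c))"
    have eA': "emeasure A' X = ennreal (1/c) * emeasure A X" if "X \<in> sets borel" for X
      unfolding A'_def using that sA by (simp add: emeasure_density_const)
    have eB': "emeasure B' X = ennreal (1/c) * emeasure B X" if "X \<in> sets borel" for X
      unfolding B'_def using that sB by (simp add: emeasure_density_const)
    have rA: "real_distribution A'"
    proof (intro real_distribution.intro real_distribution_axioms.intro prob_spaceI)
      show "emeasure A' (space A') = 1"
        using eA'[of UNIV] fA cpos unfolding A'_def c_def
        by (simp add: spA finite_measure.emeasure_eq_measure ennreal_mult[symmetric])
      show "sets A' = sets borel" unfolding A'_def using sA by simp
    qed
    have rB: "real_distribution B'"
    proof (intro real_distribution.intro real_distribution_axioms.intro prob_spaceI)
      show "emeasure B' (space B') = 1"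
        using eB'[of UNIV] fB cpos cB unfolding B'_def
        by (simp add: spB finite_measure.emeasure_eq_measure ennreal_mult[symmetric])
      show "sets B' = sets borel" unfolding B'_def using sB by simp
    qed
    have "char A' w = char B' w" for w
    proof -
      have "char A' w = (\<integral>x. (1/c) *\<^sub>R iexp (w * x) \<partial>A)"
        unfolding char_def A'_def using cpos sA
        by (subst integral_density) (auto simp: measurable_cong_sets[OF sA refl])
      also have "\<dots> = (1/c) *\<^sub>R char A w" unfolding char_def by simp
      also have "\<dots> = (1/c) *\<^sub>R char B w" using ch by simp
      also have "\<dots> = (\<integral>x. (1/c) *\<^sub>R iexp (w * x) \<partial>B)" unfolding char_def by simp
      also have "\<dots> = char B' w"
        unfolding char_def B'_def using cpos sB
        by (subst integral_density) (auto simp: measurable_cong_sets[OF sB refl])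
      finally show ?thesis .
    qed
    hence AB': "A' = B'" using Levy_uniqueness[OF rA rB] by blast
    show ?thesis
    proof (rule measure_eqI)
      fix X assume X: "X \<in> sets A"
      hence Xb: "X \<in> sets borel" using sA by simp
      have "ennreal (1/c) * emeasure A X = ennreal (1/c) * emeasure B X"
        using eA'[OF Xb] eB'[OF Xb] AB' by simp
      hence "ennreal c * (ennreal (1/c) * emeasure A X) = ennreal c * (ennreal (1/c) * emeasure B X)"
        by simp
      moreover have "ennreal c * ennreal (1/c) = 1" using cpos
        by (simp add: ennreal_mult[symmetric])
      ultimately show "emeasure A X = emeasure B X" by (simp add: mult.assoc[symmetric])
    qed (use sA sB in simp)
  qed
qed

lemma msum_finite:
  assumes fA: "finite_measure A" and fB: "finite_measure B"
    and sA: "sets A = sets borel" and sB: "sets B = sets borel"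
  shows "finite_measure (msum A B)"
proof (rule finite_measureI)
  have "emeasure (msum A B) UNIV = emeasure A UNIV + emeasure B UNIV"
    using sA sB by (simp add: emeasure_msum)
  also have "\<dots> < top"
    using fA fB sets_eq_imp_space_eq[OF sA] sets_eq_imp_space_eq[OF sB]
    by (metis ennreal_add_less_top finite_measure.emeasure_finite infinity_ennreal_def space_borel top.not_eq_extremum)
  finally show "emeasure (msum A B) (space (msum A B)) \<noteq> \<infinity>" by simp
qed

lemma bounded_integral_shift:
  fixes h :: "real \<Rightarrow> real"
  assumes fM: "finite_measure M" and sM: "sets M = sets borel"
    and h: "h \<in> borel_measurable borel" and hb: "\<And>x. \<bar>h x\<bar> \<le> C"
  shows "integrable M h" "integrable M (\<lambda>x. h x + C)"
    "ennreal (integral\<^sup>L M (\<lambda>x. h x + C)) = (\<integral>\<^sup>+x. ennreal (h x + C) \<partial>M)"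
    "integral\<^sup>L M h = integral\<^sup>L M (\<lambda>x. h x + C) - C * measure M UNIV"
proof -
  interpret finite_measure M by (rule fM)
  have hm: "h \<in> borel_measurable M" using h by (simp add: measurable_cong_sets[OF sM refl])
  show ih: "integrable M h"
    by (rule integrable_const_bound[where B=C]) (use hb hm in auto)
  show ih2: "integrable M (\<lambda>x. h x + C)" using ih by simp
  have nn: "\<And>x. 0 \<le> h x + C" using hb by (smt (verit))
  show "ennreal (integral\<^sup>L M (\<lambda>x. h x + C)) = (\<integral>\<^sup>+x. ennreal (h x + C) \<partial>M)"
    using nn_integral_eq_integral[OF ih2] nn by simp
  have "integral\<^sup>L M (\<lambda>x. h x + C) = integral\<^sup>L M h + C * measure M UNIV"
    using ih sets_eq_imp_space_eq[OF sM] by simp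
  then show "integral\<^sup>L M h = integral\<^sup>L M (\<lambda>x. h x + C) - C * measure M UNIV" by simp
qed

lemma msum_integral_real:
  fixes h :: "real \<Rightarrow> real"
  assumes fA: "finite_measure A" and fB: "finite_measure B"
    and sA: "sets A = sets borel" and sB: "sets B = sets borel"
    and h: "h \<in> borel_measurable borel" and hb: "\<And>x. \<bar>h x\<bar> \<le> C"
  shows "integral\<^sup>L (msum A B) h = integral\<^sup>L A h + integral\<^sup>L B h"
proof -
  have fS: "finite_measure (msum A B)" by (rule msum_finite[OF assms(1-4)])
  have sS: "sets (msum A B) = sets borel" by simp
  note SA = bounded_integral_shift[OF fA sA h hb]
  note SB = bounded_integral_shift[OF fB sB h hb]
  note SS = bounded_integral_shift[OF fS sS h hb]
  have nn: "\<And>x. 0 \<le> h x + C" using hb by (smt (verit))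
  have hC: "(\<lambda>x. ennreal (h x + C)) \<in> borel_measurable borel" using h by measurable
  have "ennreal (integral\<^sup>L (msum A B) (\<lambda>x. h x + C))
      = ennreal (integral\<^sup>L A (\<lambda>x. h x + C)) + ennreal (integral\<^sup>L B (\<lambda>x. h x + C))"
    unfolding SA(3) SB(3) SS(3) by (rule nn_integral_msum[OF sA sB hC])
  also have "\<dots> = ennreal (integral\<^sup>L A (\<lambda>x. h x + C) + integral\<^sup>L B (\<lambda>x. h x + C))"
    using nn by (intro ennreal_plus[symmetric] integral_nonneg) auto
  finally have e1: "integral\<^sup>L (msum A B) (\<lambda>x. h x + C) = integral\<^sup>L A (\<lambda>x. h x + C) + integral\<^sup>L B (\<lambda>x. h x + C)"
    using nn by (subst (asm) ennreal_inj) (auto intro!: integral_nonneg add_nonneg_nonneg)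
  have "emeasure (msum A B) UNIV = emeasure A UNIV + emeasure B UNIV"
    using sA sB by (simp add: emeasure_msum)
  hence e2: "measure (msum A B) UNIV = measure A UNIV + measure B UNIV"
    using fA fB fS sets_eq_imp_space_eq[OF sA] sets_eq_imp_space_eq[OF sB]
    by (metis ennreal_inj ennreal_plus finite_measure.emeasure_eq_measure measure_nonneg
        add_nonneg_nonneg msum_space)
  show ?thesis unfolding SA(4) SB(4) SS(4) e1 e2 by (simp add: algebra_simps)
qed

lemma complex_split_integral:
  fixes h :: "real \<Rightarrow> complex"
  assumes "integrable M h"
  shows "integral\<^sup>L M h = complex_of_real (integral\<^sup>L M (\<lambda>x. Re (h x))) + \<i> * complex_of_real (integral\<^sup>L M (\<lambda>x. Im (h x)))"
proof -
  have "integral\<^sup>L M h = integral\<^sup>L M (\<lambda>x. complex_of_real (Re (h x)) + \<i> * complex_of_real (Im (h x)))"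
    by (intro Bochner_Integration.integral_cong refl) (simp add: complex_eq_iff)
  also have "\<dots> = integral\<^sup>L M (\<lambda>x. complex_of_real (Re (h x))) + integral\<^sup>L M (\<lambda>x. \<i> * complex_of_real (Im (h x)))"
    using assms by (intro Bochner_Integration.integral_add integrable_mult_right integrable_of_real integrable_Re integrable_Im)
  also have "\<dots> = complex_of_real (integral\<^sup>L M (\<lambda>x. Re (h x))) + \<i> * complex_of_real (integral\<^sup>L M (\<lambda>x. Im (h x)))"
    by simp
  finally show ?thesis .
qed

lemma char_msum:
  assumes fA: "finite_measure A" and fB: "finite_measure B"
    and sA: "sets A = sets borel" and sB: "sets B = sets borel"
  shows "char (msum A B) w = char A w + char B w"
proof -
  have fS: "finite_measure (msum A B)" by (rule msum_finite[OF assms(1-4)])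
  have b: "\<And>x. \<bar>Re (iexp (w * x))\<bar> \<le> 1" "\<And>x. \<bar>Im (iexp (w * x))\<bar> \<le> 1"
    by (simp_all add: Re_exp Im_exp)
  have m1: "(\<lambda>x. Re (iexp (w * x))) \<in> borel_measurable borel" by measurable
  have m2: "(\<lambda>x. Im (iexp (w * x))) \<in> borel_measurable borel" by measurable
  have int: "integrable M (\<lambda>x. iexp (w * x))" if "finite_measure M" "sets M = sets borel" for M
  proof -
    interpret finite_measure M by (rule that(1))
    show ?thesis by (rule integrable_const_bound[where B=1]) (use that(2) in \<open>auto simp: measurable_cong_sets[OF that(2) refl]\<close>)
  qed
  show ?thesis unfolding char_def
    using complex_split_integral[OF int[OF fA sA]] complex_split_integral[OF int[OF fB sB]]
      complex_split_integral[OF int[OF fS msum_sets]]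
      msum_integral_real[OF assms m1 b(1)] msum_integral_real[OF assms m2 b(2)]
    by (simp add: algebra_simps)
qed

lemma sum_unique:
  fixes h :: "real \<Rightarrow> real" and C :: real
  assumes f: "finite_measure A1" "finite_measure A2" "finite_measure B1" "finite_measure B2"
    and s: "sets A1 = sets borel" "sets A2 = sets borel" "sets B1 = sets borel" "sets B2 = sets borel"
    and ch: "\<And>w. char A1 w + char A2 w = char B1 w + char B2 w"
    and h: "h \<in> borel_measurable borel" and hb: "\<And>x. \<bar>h x\<bar> \<le> C"
  shows "integral\<^sup>L A1 h + integral\<^sup>L A2 h = integral\<^sup>L B1 h + integral\<^sup>L B2 h"
proof -
  have "msum A1 A2 = msum B1 B2"
    by (rule fourier_unique) (use f s ch in \<open>auto intro: msum_finite simp: char_msum\<close>)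
  hence "integral\<^sup>L (msum A1 A2) h = integral\<^sup>L (msum B1 B2) h" by simp
  thus ?thesis using msum_integral_real[OF f(1,2) s(1,2) h hb] msum_integral_real[OF f(3,4) s(3,4) h hb]
    by simp
qed

lemma integrable_bdd_mult:
  fixes u \<phi> :: "'b \<Rightarrow> 'a::{banach, real_normed_field, second_countable_topology}"
  assumes u: "integrable M u" and \<phi>: "\<phi> \<in> borel_measurable M" and b: "\<And>x. norm (\<phi> x) \<le> C"
  shows "integrable M (\<lambda>x. \<phi> x * u x)"
proof (rule Bochner_Integration.integrable_bound[where f="\<lambda>x. C * norm (u x)"])
  show "integrable M (\<lambda>x. C * norm (u x))" using u by simp
  show "(\<lambda>x. \<phi> x * u x) \<in> borel_measurable M" using u \<phi> by measurable
  show "AE x in M. norm (\<phi> x * u x) \<le> norm (C * norm (u x))"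
  proof (rule AE_I2)
    fix x
    have "norm (\<phi> x * u x) = norm (\<phi> x) * norm (u x)" by (simp add: norm_mult)
    also have "\<dots> \<le> C * norm (u x)" using b by (simp add: mult_right_mono)
    also have "\<dots> \<le> norm (C * norm (u x))" by simp
    finally show "norm (\<phi> x * u x) \<le> norm (C * norm (u x))" .
  qed
qed

lemma finite_density_pos:
  fixes p :: "real \<Rightarrow> real"
  assumes fM: "finite_measure M" and sM: "sets M = sets borel" and p: "integrable M p"
  shows "finite_measure (density M (\<lambda>x. ennreal (max (p x) 0)))"
    "sets (density M (\<lambda>x. ennreal (max (p x) 0))) = sets borel"
proof -
  have ip: "integrable M (\<lambda>x. max (p x) 0)" using p by simp
  have pm: "p \<in> borel_measurable M" using p by simp
  show "finite_measure (density M (\<lambda>x. ennreal (max (p x) 0)))"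
  proof (rule finite_measureI)
    have "emeasure (density M (\<lambda>x. ennreal (max (p x) 0))) (space M) = (\<integral>\<^sup>+x. ennreal (max (p x) 0) \<partial>M)"
      using pm by (subst emeasure_density) (auto intro!: nn_integral_cong)
    also have "\<dots> = ennreal (integral\<^sup>L M (\<lambda>x. max (p x) 0))"
      using nn_integral_eq_integral[OF ip] by simp
    finally show "emeasure (density M (\<lambda>x. ennreal (max (p x) 0))) (space (density M (\<lambda>x. ennreal (max (p x) 0)))) \<noteq> \<infinity>"
      by simp
  qed
  show "sets (density M (\<lambda>x. ennreal (max (p x) 0))) = sets borel" using sM by simp
qed

lemma integral_density_pos:
  fixes p :: "real \<Rightarrow> real" and \<phi> :: "real \<Rightarrow> 'b::{banach, second_countable_topology}"
  assumes p: "integrable M p" and \<phi>: "\<phi> \<in> borel_measurable M"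
  shows "integral\<^sup>L (density M (\<lambda>x. ennreal (max (p x) 0))) \<phi> = integral\<^sup>L M (\<lambda>x. max (p x) 0 *\<^sub>R \<phi> x)"
  using p \<phi> by (subst integral_density) auto

lemma transfer_real:
  fixes p q h :: "real \<Rightarrow> real" and C :: real
  assumes fM: "finite_measure M" and fN: "finite_measure N"
    and sM: "sets M = sets borel" and sN: "sets N = sets borel"
    and p: "integrable M p" and q: "integrable N q"
    and eq: "\<And>w. (\<integral>x. iexp (w * x) * complex_of_real (p x) \<partial>M) = (\<integral>x. iexp (w * x) * complex_of_real (q x) \<partial>N)"
    and h: "h \<in> borel_measurable borel" and hb: "\<And>x. \<bar>h x\<bar> \<le> C"
  shows "(\<integral>x. h x * p x \<partial>M) = (\<integral>x. h x * q x \<partial>N)"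
proof -
  have mp: "integrable M (\<lambda>x. - p x)" using p by simp
  have mq: "integrable N (\<lambda>x. - q x)" using q by simp
  define A1 where "A1 = density M (\<lambda>x. ennreal (max (p x) 0))"
  define A2 where "A2 = density N (\<lambda>x. ennreal (max (- q x) 0))"
  define B1 where "B1 = density M (\<lambda>x. ennreal (max (- p x) 0))"
  define B2 where "B2 = density N (\<lambda>x. ennreal (max (q x) 0))"
  note FA1 = finite_density_pos[OF fM sM p, folded A1_def]
  note FA2 = finite_density_pos[OF fN sN mq, folded A2_def]
  note FB1 = finite_density_pos[OF fM sM mp, folded B1_def]
  note FB2 = finite_density_pos[OF fN sN q, folded B2_def]
  have hM: "h \<in> borel_measurable M" using h by (simp add: measurable_cong_sets[OF sM refl])
  have hN: "h \<in> borel_measurable N" using h by (simp add: measurable_cong_sets[OF sN refl])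
  have eM: "\<And>w. (\<lambda>x. iexp (w * x)) \<in> borel_measurable M" by (simp add: measurable_cong_sets[OF sM refl])
  have eN: "\<And>w. (\<lambda>x. iexp (w * x)) \<in> borel_measurable N" by (simp add: measurable_cong_sets[OF sN refl])
  have nb: "\<And>w x. norm (iexp (w * x)) \<le> 1" by (simp add: norm_exp_i_times)
  have cpos: "\<And>(u::real\<Rightarrow>real) w (M::real measure). integrable M u \<Longrightarrow> (\<lambda>x. iexp (w * x)) \<in> borel_measurable M \<Longrightarrow>
      char (density M (\<lambda>x. ennreal (max (u x) 0))) w = (\<integral>x. iexp (w * x) * complex_of_real (max (u x) 0) \<partial>M)"
    unfolding char_def by (subst integral_density_pos) (auto simp: scaleR_conv_of_real mult.commute)
  have ii: "\<And>(u::real\<Rightarrow>real) w (M::real measure). integrable M u \<Longrightarrow> (\<lambda>x. iexp (w * x)) \<in> borel_measurable M \<Longrightarrow>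
      integrable M (\<lambda>x. iexp (w * x) * complex_of_real (u x))"
    by (rule integrable_bdd_mult[OF _ _ nb]) auto
  have split: "\<And>(u::real\<Rightarrow>real) w (M::real measure). integrable M u \<Longrightarrow> (\<lambda>x. iexp (w * x)) \<in> borel_measurable M \<Longrightarrow>
      (\<integral>x. iexp (w * x) * complex_of_real (u x) \<partial>M) =
      (\<integral>x. iexp (w * x) * complex_of_real (max (u x) 0) \<partial>M) - (\<integral>x. iexp (w * x) * complex_of_real (max (- u x) 0) \<partial>M)"
  proof -
    fix u :: "real \<Rightarrow> real" and w and M :: "real measure" assume u: "integrable M u" and e: "(\<lambda>x. iexp (w * x)) \<in> borel_measurable M"
    have "(\<integral>x. iexp (w * x) * complex_of_real (u x) \<partial>M) =
      (\<integral>x. iexp (w * x) * complex_of_real (max (u x) 0) - iexp (w * x) * complex_of_real (max (- u x) 0) \<partial>M)"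
      by (intro Bochner_Integration.integral_cong refl) (simp add: max_def algebra_simps)
    also have "\<dots> = (\<integral>x. iexp (w * x) * complex_of_real (max (u x) 0) \<partial>M) - (\<integral>x. iexp (w * x) * complex_of_real (max (- u x) 0) \<partial>M)"
      using u e by (intro Bochner_Integration.integral_diff ii) auto
    finally show "(\<integral>x. iexp (w * x) * complex_of_real (u x) \<partial>M) =
      (\<integral>x. iexp (w * x) * complex_of_real (max (u x) 0) \<partial>M) - (\<integral>x. iexp (w * x) * complex_of_real (max (- u x) 0) \<partial>M)" .
  qed
  have ch: "char A1 w + char A2 w = char B1 w + char B2 w" for w
  proof -
    have "char A1 w - char B1 w = char B2 w - char A2 w"
      unfolding A1_def A2_def B1_def B2_def
      using eq[of w] split[OF p eM] split[OF q eN] cpos[OF p eM] cpos[OF q eN] cpos[OF mp eM] cpos[OF mq eN]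
      by simp
    thus ?thesis by (simp add: algebra_simps)
  qed
  have su: "integral\<^sup>L A1 h + integral\<^sup>L A2 h = integral\<^sup>L B1 h + integral\<^sup>L B2 h"
    by (rule sum_unique[OF FA1(1) FA2(1) FB1(1) FB2(1) FA1(2) FA2(2) FB1(2) FB2(2) ch h hb])
  have hb': "\<And>x. norm (h x) \<le> C" using hb by simp
  have rsplit: "\<And>(u::real\<Rightarrow>real) (M::real measure). integrable M u \<Longrightarrow> h \<in> borel_measurable M \<Longrightarrow>
      (\<integral>x. h x * u x \<partial>M) = (\<integral>x. max (u x) 0 * h x \<partial>M) - (\<integral>x. max (- u x) 0 * h x \<partial>M)"
  proof -
    fix u :: "real \<Rightarrow> real" and M :: "real measure" assume u: "integrable M u" and hm: "h \<in> borel_measurable M"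
    have i1: "integrable M (\<lambda>x. h x * max (u x) 0)" using u hm by (intro integrable_bdd_mult[OF _ _ hb']) auto
    have i2: "integrable M (\<lambda>x. h x * max (- u x) 0)" using u hm by (intro integrable_bdd_mult[OF _ _ hb']) auto
    have "(\<integral>x. h x * u x \<partial>M) = (\<integral>x. h x * max (u x) 0 - h x * max (- u x) 0 \<partial>M)"
      by (intro Bochner_Integration.integral_cong refl) (simp add: max_def algebra_simps)
    also have "\<dots> = (\<integral>x. h x * max (u x) 0 \<partial>M) - (\<integral>x. h x * max (- u x) 0 \<partial>M)"
      using i1 i2 by (rule Bochner_Integration.integral_diff)
    finally show "(\<integral>x. h x * u x \<partial>M) = (\<integral>x. max (u x) 0 * h x \<partial>M) - (\<integral>x. max (- u x) 0 * h x \<partial>M)"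
      by (simp add: mult.commute)
  qed
  show ?thesis
    using su unfolding A1_def A2_def B1_def B2_def
    using integral_density_pos[OF p hM] integral_density_pos[OF q hN] integral_density_pos[OF mp hM]
      integral_density_pos[OF mq hN] rsplit[OF p hM] rsplit[OF q hN]
    by simp
qed

lemma cnj_iexp: "cnj (iexp (w * x)) = iexp ((- w) * x)"
  by (simp add: exp_cnj)

lemma transfer_complex:
  fixes f g :: "real \<Rightarrow> complex" and a :: "real \<Rightarrow> real" and C :: real
  assumes fM: "finite_measure M" and fN: "finite_measure N"
    and sM: "sets M = sets borel" and sN: "sets N = sets borel"
    and f: "integrable M f" and g: "integrable N g"
    and eq: "\<And>w. (\<integral>x. iexp (w * x) * f x \<partial>M) = (\<integral>x. iexp (w * x) * g x \<partial>N)"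
    and a: "a \<in> borel_measurable borel" and ab: "\<And>x. \<bar>a x\<bar> \<le> C"
  shows "(\<integral>x. a x * Re (f x) \<partial>M) = (\<integral>x. a x * Re (g x) \<partial>N)"
    "(\<integral>x. a x * Im (f x) \<partial>M) = (\<integral>x. a x * Im (g x) \<partial>N)"
proof -
  have nb: "\<And>w x. norm (iexp (w * x)) \<le> 1" by (simp add: norm_exp_i_times)
  have eM: "\<And>w. (\<lambda>x. iexp (w * x)) \<in> borel_measurable M" by (simp add: measurable_cong_sets[OF sM refl])
  have eN: "\<And>w. (\<lambda>x. iexp (w * x)) \<in> borel_measurable N" by (simp add: measurable_cong_sets[OF sN refl])
  have J: "\<And>w (u::real\<Rightarrow>complex) (M::real measure). (\<integral>x. iexp (w * x) * cnj (u x) \<partial>M) = cnj (\<integral>x. iexp ((- w) * x) * u x \<partial>M)"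
  proof -
    fix w and u :: "real \<Rightarrow> complex" and M :: "real measure"
    have "cnj (\<integral>x. iexp ((- w) * x) * u x \<partial>M) = (\<integral>x. cnj (iexp ((- w) * x) * u x) \<partial>M)"
      by (rule Bochner_Integration.integral_cnj[symmetric])
    also have "\<dots> = (\<integral>x. iexp (w * x) * cnj (u x) \<partial>M)"
      by (intro Bochner_Integration.integral_cong refl) (simp add: exp_cnj)
    finally show "(\<integral>x. iexp (w * x) * cnj (u x) \<partial>M) = cnj (\<integral>x. iexp ((- w) * x) * u x \<partial>M)" by simp
  qed
  have RI: "(\<integral>x. iexp (w * x) * complex_of_real (Re (u x)) \<partial>M) =
        ((\<integral>x. iexp (w * x) * u x \<partial>M) + (\<integral>x. iexp (w * x) * cnj (u x) \<partial>M)) / 2 \<and>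
      (\<integral>x. iexp (w * x) * complex_of_real (Im (u x)) \<partial>M) =
        ((\<integral>x. iexp (w * x) * u x \<partial>M) - (\<integral>x. iexp (w * x) * cnj (u x) \<partial>M)) / (2 * \<i>)"
    if u: "integrable M u" and e: "(\<lambda>x. iexp (w * x)) \<in> borel_measurable M"
    for w and u :: "real \<Rightarrow> complex" and M :: "real measure"
  proof
    have reR: "\<And>z::complex. complex_of_real (Re z) = (z + cnj z) / 2" by (simp add: complex_eq_iff)
    have reI: "\<And>z::complex. complex_of_real (Im z) = (z - cnj z) / (2 * \<i>)" by (simp add: complex_eq_iff)
    have i1: "integrable M (\<lambda>x. iexp (w * x) * u x)" by (rule integrable_bdd_mult[OF u e nb])
    have i2: "integrable M (\<lambda>x. iexp (w * x) * cnj (u x))" by (rule integrable_bdd_mult[OF _ e nb]) (use u in simp)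
    have "(\<integral>x. iexp (w * x) * complex_of_real (Re (u x)) \<partial>M) =
        (\<integral>x. (iexp (w * x) * u x + iexp (w * x) * cnj (u x)) / 2 \<partial>M)"
      by (intro Bochner_Integration.integral_cong refl) (simp only: reR, simp add: field_simps)
    also have "\<dots> = ((\<integral>x. iexp (w * x) * u x \<partial>M) + (\<integral>x. iexp (w * x) * cnj (u x) \<partial>M)) / 2"
      using i1 i2 by simp
    finally show "(\<integral>x. iexp (w * x) * complex_of_real (Re (u x)) \<partial>M) =
        ((\<integral>x. iexp (w * x) * u x \<partial>M) + (\<integral>x. iexp (w * x) * cnj (u x) \<partial>M)) / 2" .
    have "(\<integral>x. iexp (w * x) * complex_of_real (Im (u x)) \<partial>M) =
        (\<integral>x. (iexp (w * x) * u x - iexp (w * x) * cnj (u x)) / (2 * \<i>) \<partial>M)"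
      by (intro Bochner_Integration.integral_cong refl) (simp only: reI, simp add: field_simps)
    also have "\<dots> = ((\<integral>x. iexp (w * x) * u x \<partial>M) - (\<integral>x. iexp (w * x) * cnj (u x) \<partial>M)) / (2 * \<i>)"
      using i1 i2 by simp
    finally show "(\<integral>x. iexp (w * x) * complex_of_real (Im (u x)) \<partial>M) =
        ((\<integral>x. iexp (w * x) * u x \<partial>M) - (\<integral>x. iexp (w * x) * cnj (u x) \<partial>M)) / (2 * \<i>)" .
  qed
  have eqc: "\<And>w. (\<integral>x. iexp (w * x) * cnj (f x) \<partial>M) = (\<integral>x. iexp (w * x) * cnj (g x) \<partial>N)"
    unfolding J using eq by presburger
  have eqR: "(\<integral>x. iexp (w * x) * complex_of_real (Re (f x)) \<partial>M) = (\<integral>x. iexp (w * x) * complex_of_real (Re (g x)) \<partial>N)" for w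
  proof -
    show ?thesis
      unfolding conjunct1[OF RI[OF f eM[of w]]] conjunct1[OF RI[OF g eN[of w]]] eq[of w] eqc[of w] by (rule refl)
  qed
  have eqI: "(\<integral>x. iexp (w * x) * complex_of_real (Im (f x)) \<partial>M) = (\<integral>x. iexp (w * x) * complex_of_real (Im (g x)) \<partial>N)" for w
  proof -
    show ?thesis
      unfolding conjunct2[OF RI[OF f eM[of w]]] conjunct2[OF RI[OF g eN[of w]]] eq[of w] eqc[of w] by (rule refl)
  qed
  show "(\<integral>x. a x * Re (f x) \<partial>M) = (\<integral>x. a x * Re (g x) \<partial>N)"
    by (rule transfer_real[OF fM fN sM sN _ _ eqR a ab]) (use f g in auto)
  show "(\<integral>x. a x * Im (f x) \<partial>M) = (\<integral>x. a x * Im (g x) \<partial>N)"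
    by (rule transfer_real[OF fM fN sM sN _ _ eqI a ab]) (use f g in auto)
qed

lemma meas_cong_borel:
  assumes "sets M = sets borel"
  shows "(f \<in> measurable M N) = (f \<in> measurable borel N)"
  using measurable_cong_sets[of M borel N N] assms by simp

lemma laplace_repr_facts:
  assumes "laplace_repr M f F"
  shows "sets M = sets borel" "finite_measure M" "emeasure M {..<0} = 0" "integrable M f"
    "\<And>z. 0 < Re z \<Longrightarrow> F z = (\<integral>s. exp (- (complex_of_real s * z)) * f s \<partial>M)"
  using assms unfolding laplace_repr_def by auto

lemma laplace_AE_nonneg:
  assumes "laplace_repr M f F"
  shows "AE x in M. 0 \<le> x"
proof (rule AE_I[where N="{..<0}"])
  show "{x \<in> space M. \<not> 0 \<le> x} \<subseteq> {..<0}" by auto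
  show "emeasure M {..<0} = 0" using laplace_repr_facts[OF assms] by simp
  show "{..<0} \<in> sets M" using laplace_repr_facts[OF assms] by simp
qed

lemma laplace_fourier:
  assumes L: "laplace_repr M f F" and e: "0 < \<epsilon>"
  shows "(\<integral>x. iexp (w * x) * (complex_of_real (min 1 (exp (- (\<epsilon> * x)))) * f x) \<partial>M) = F (Complex \<epsilon> (- w))"
proof -
  note LF = laplace_repr_facts[OF L]
  have fm: "f \<in> borel_measurable M" using LF(4) by simp
  have fbb: "f \<in> borel_measurable borel" using fm meas_cong_borel[OF LF(1)] by auto
  have mm: "\<And>h::real\<Rightarrow>complex. h \<in> borel_measurable borel \<Longrightarrow> h \<in> borel_measurable M"
    by (simp add: meas_cong_borel[OF LF(1)])
  have "(\<integral>x. iexp (w * x) * (complex_of_real (min 1 (exp (- (\<epsilon> * x)))) * f x) \<partial>M)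
      = (\<integral>x. exp (- (complex_of_real x * Complex \<epsilon> (- w))) * f x \<partial>M)"
  proof (rule integral_cong_AE)
    show "(\<lambda>x. iexp (w * x) * (complex_of_real (min 1 (exp (- (\<epsilon> * x)))) * f x)) \<in> borel_measurable M"
      unfolding meas_cong_borel[OF LF(1)] using fbb by measurable
    show "(\<lambda>x. exp (- (complex_of_real x * Complex \<epsilon> (- w))) * f x) \<in> borel_measurable M"
      unfolding meas_cong_borel[OF LF(1)] using fbb by measurable
    show "AE x in M. iexp (w * x) * (complex_of_real (min 1 (exp (- (\<epsilon> * x)))) * f x) =
        exp (- (complex_of_real x * Complex \<epsilon> (- w))) * f x"
      using laplace_AE_nonneg[OF L]
    proof eventually_elim
      case (elim x)
      have "min 1 (exp (- (\<epsilon> * x))) = exp (- (\<epsilon> * x))" using elim e by simp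
      moreover have "exp (- (complex_of_real x * Complex \<epsilon> (- w))) = complex_of_real (exp (- (\<epsilon> * x))) * iexp (w * x)"
      proof -
        have ee: "- (complex_of_real x * Complex \<epsilon> (- w)) = complex_of_real (- (\<epsilon> * x)) + \<i> * complex_of_real (w * x)"
          by (simp add: complex_eq_iff)
        show ?thesis unfolding ee exp_add by (simp only: exp_of_real)
      qed
      ultimately show ?case by simp
    qed
  qed
  also have "\<dots> = F (Complex \<epsilon> (- w))" using LF(5)[of "Complex \<epsilon> (- w)"] e by simp
  finally show ?thesis .
qed

lemma laplace_transfer:
  fixes a :: "real \<Rightarrow> real" and C :: real
  assumes L1: "laplace_repr M f F" and L2: "laplace_repr N g F"
    and a: "a \<in> borel_measurable borel" and ab: "\<And>x. \<bar>a x\<bar> \<le> C"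
  shows "(\<integral>x. a x * Re (f x) \<partial>M) = (\<integral>x. a x * Re (g x) \<partial>N) \<and>
         (\<integral>x. a x * Im (f x) \<partial>M) = (\<integral>x. a x * Im (g x) \<partial>N)"
proof -
  note LF = laplace_repr_facts[OF L1]
  note LG = laplace_repr_facts[OF L2]
  define d where "d n x = min 1 (exp (- (inverse (real (Suc n)) * x)))" for n x
  have d1: "\<And>n x. \<bar>d n x\<bar> \<le> 1" unfolding d_def by simp
  have dm: "\<And>n. d n \<in> borel_measurable borel" unfolding d_def by measurable
  have dlim: "\<And>x. (\<lambda>n. d n x) \<longlonglongrightarrow> 1"
  proof -
    fix x :: real
    have "(\<lambda>n. inverse (real (Suc n)) * x) \<longlonglongrightarrow> 0 * x"
      by (rule tendsto_mult[OF LIMSEQ_inverse_real_of_nat tendsto_const])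
    hence "(\<lambda>n. - (inverse (real (Suc n)) * x)) \<longlonglongrightarrow> - (0 * x)"
      by (rule tendsto_minus)
    hence "(\<lambda>n. min 1 (exp (- (inverse (real (Suc n)) * x)))) \<longlonglongrightarrow> min 1 (exp (- (0 * x)))"
      by (rule tendsto_min[OF tendsto_const tendsto_exp])
    thus "(\<lambda>n. d n x) \<longlonglongrightarrow> 1" unfolding d_def by simp
  qed
  have step: "(\<integral>x. a x * d n x * Re (f x) \<partial>M) = (\<integral>x. a x * d n x * Re (g x) \<partial>N) \<and>
              (\<integral>x. a x * d n x * Im (f x) \<partial>M) = (\<integral>x. a x * d n x * Im (g x) \<partial>N)" for n
  proof -
    define fn where "fn x = complex_of_real (d n x) * f x" for x
    define gn where "gn x = complex_of_real (d n x) * g x" for x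
    have ifn: "integrable M fn" unfolding fn_def
      by (rule integrable_bdd_mult[where C=1]) (use LF(4) dm LF(1) d1 in \<open>auto simp: measurable_cong_sets[OF LF(1) refl]\<close>)
    have ign: "integrable N gn" unfolding gn_def
      by (rule integrable_bdd_mult[where C=1]) (use LG(4) dm LG(1) d1 in \<open>auto simp: measurable_cong_sets[OF LG(1) refl]\<close>)
    have eq: "(\<integral>x. iexp (w * x) * fn x \<partial>M) = (\<integral>x. iexp (w * x) * gn x \<partial>N)" for w
      unfolding fn_def gn_def d_def
      using laplace_fourier[OF L1, of "inverse (real (Suc n))" w] laplace_fourier[OF L2, of "inverse (real (Suc n))" w]
      by simp
    have abC: "\<And>x. \<bar>a x\<bar> \<le> C" by (rule ab)
    note T = transfer_complex[OF LF(2) LG(2) LF(1) LG(1) ifn ign eq a abC]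
    show ?thesis using T unfolding fn_def gn_def by (simp add: mult.assoc mult.left_commute)
  qed
  have conv: "(\<lambda>n. (\<integral>x. a x * d n x * P (u x) \<partial>K)) \<longlonglongrightarrow> (\<integral>x. a x * P (u x) \<partial>K)"
    if u: "integrable K u" and sK: "sets K = sets borel" and P: "P = Re \<or> P = Im"
    for K :: "real measure" and u :: "real \<Rightarrow> complex" and P
  proof (rule integral_dominated_convergence[where w="\<lambda>x. C * norm (u x)"])
    have am: "a \<in> borel_measurable K" using a by (simp add: measurable_cong_sets[OF sK refl])
    have dmK: "\<And>n. d n \<in> borel_measurable K" using dm by (simp add: measurable_cong_sets[OF sK refl])
    have Pm: "(\<lambda>x. P (u x)) \<in> borel_measurable K" using P u by auto
    show "(\<lambda>x. a x * P (u x)) \<in> borel_measurable K" using am Pm by measurable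
    show "\<And>n. (\<lambda>x. a x * d n x * P (u x)) \<in> borel_measurable K" using am Pm dmK by measurable
    show "integrable K (\<lambda>x. C * norm (u x))" using u by simp
    show "AE x in K. (\<lambda>n. a x * d n x * P (u x)) \<longlonglongrightarrow> a x * P (u x)"
    proof (rule AE_I2)
      fix x
      have "(\<lambda>n. a x * d n x * P (u x)) \<longlonglongrightarrow> a x * 1 * P (u x)"
        by (intro tendsto_intros dlim)
      thus "(\<lambda>n. a x * d n x * P (u x)) \<longlonglongrightarrow> a x * P (u x)" by simp
    qed
    show "AE x in K. norm (a x * d n x * P (u x)) \<le> C * norm (u x)" for n
    proof (rule AE_I2)
      fix x
      have "\<bar>P (u x)\<bar> \<le> norm (u x)" using P abs_Re_le_cmod abs_Im_le_cmod by auto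
      moreover have "\<bar>a x * d n x\<bar> \<le> C"
      proof -
        have C0: "0 \<le> C" using order_trans[OF abs_ge_zero ab] by blast
        have "\<bar>a x\<bar> * \<bar>d n x\<bar> \<le> C * 1" by (rule mult_mono[OF ab d1]) (use C0 in auto)
        thus ?thesis by (simp add: abs_mult)
      qed
      ultimately have "\<bar>a x * d n x\<bar> * \<bar>P (u x)\<bar> \<le> C * norm (u x)"
        by (intro mult_mono) auto
      thus "norm (a x * d n x * P (u x)) \<le> C * norm (u x)" by (simp add: abs_mult)
    qed
  qed
  have "(\<lambda>n. (\<integral>x. a x * d n x * Re (f x) \<partial>M)) \<longlonglongrightarrow> (\<integral>x. a x * Re (g x) \<partial>N)"
    using conv[OF LG(4) LG(1), of Re] step by simp
  moreover have "(\<lambda>n. (\<integral>x. a x * d n x * Im (f x) \<partial>M)) \<longlonglongrightarrow> (\<integral>x. a x * Im (g x) \<partial>N)"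
    using conv[OF LG(4) LG(1), of Im] step by simp
  ultimately show ?thesis
    using conv[OF LF(4) LF(1), of Re] conv[OF LF(4) LF(1), of Im] LIMSEQ_unique by blast
qed

lemma tv_le:
  assumes L1: "laplace_repr M f F" and L2: "laplace_repr N g F"
  shows "total_variation M f \<le> total_variation N g"
proof -
  note LF = laplace_repr_facts[OF L1]
  note LG = laplace_repr_facts[OF L2]
  define a1 where "a1 x = Re (sgn (f x))" for x
  define a2 where "a2 x = Im (sgn (f x))" for x
  have fb: "f \<in> borel_measurable borel" using borel_measurable_integrable[OF LF(4)] meas_cong_borel[OF LF(1)] by auto
  have a1m: "a1 \<in> borel_measurable borel" unfolding a1_def using fb by measurable
  have a2m: "a2 \<in> borel_measurable borel" unfolding a2_def using fb by measurable
  have sb: "\<And>z::complex. norm (sgn z) \<le> 1" by (simp add: norm_sgn)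
  have a1b: "\<And>x. \<bar>a1 x\<bar> \<le> 1" unfolding a1_def by (metis abs_Re_le_cmod order.trans sb)
  have a2b: "\<And>x. \<bar>a2 x\<bar> \<le> 1" unfolding a2_def by (metis abs_Im_le_cmod order.trans sb)
  note T1 = laplace_transfer[OF L1 L2 a1m a1b]
  note T2 = laplace_transfer[OF L1 L2 a2m a2b]
  have iM: "\<And>a. a \<in> borel_measurable borel \<Longrightarrow> (\<And>x. \<bar>a x\<bar> \<le> 1) \<Longrightarrow> integrable M (\<lambda>x. a x * Re (f x)) \<and> integrable M (\<lambda>x. a x * Im (f x))"
    by (intro conjI integrable_bdd_mult[where C=1]) (use LF(4) in \<open>auto simp: measurable_cong_sets[OF LF(1) refl]\<close>)
  have iN: "\<And>a. a \<in> borel_measurable borel \<Longrightarrow> (\<And>x. \<bar>a x\<bar> \<le> 1) \<Longrightarrow> integrable N (\<lambda>x. a x * Re (g x)) \<and> integrable N (\<lambda>x. a x * Im (g x))"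
    by (intro conjI integrable_bdd_mult[where C=1]) (use LG(4) in \<open>auto simp: measurable_cong_sets[OF LG(1) refl]\<close>)
  have pt: "norm z = Re (sgn z) * Re z + Im (sgn z) * Im z" for z :: complex
  proof (cases "z = 0")
    case False
    hence "cmod z > 0" by simp
    moreover have "(cmod z)\<^sup>2 = (Re z)\<^sup>2 + (Im z)\<^sup>2" by (rule cmod_power2)
    ultimately show ?thesis by (simp add: field_simps power2_eq_square)
  qed simp
  have pt2: "Re (sgn s) * Re z + Im (sgn s) * Im z \<le> norm z" for s z :: complex
  proof -
    have "Re (sgn s) * Re z + Im (sgn s) * Im z = Re (cnj (sgn s) * z)" by simp
    also have "\<dots> \<le> norm (cnj (sgn s) * z)" by (rule complex_Re_le_cmod)
    also have "\<dots> = norm (sgn s) * norm z" by (simp add: norm_mult)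
    also have "\<dots> \<le> norm z" using sb[of s] by (simp add: mult_left_le_one_le)
    finally show ?thesis .
  qed
  have "total_variation M f = (\<integral>x. a1 x * Re (f x) + a2 x * Im (f x) \<partial>M)"
    unfolding total_variation_def a1_def a2_def by (intro Bochner_Integration.integral_cong refl) (rule pt)
  also have "\<dots> = (\<integral>x. a1 x * Re (f x) \<partial>M) + (\<integral>x. a2 x * Im (f x) \<partial>M)"
    using iM[OF a1m a1b] iM[OF a2m a2b] by (intro Bochner_Integration.integral_add) auto
  also have "\<dots> = (\<integral>x. a1 x * Re (g x) \<partial>N) + (\<integral>x. a2 x * Im (g x) \<partial>N)"
    using T1 T2 by simp
  also have "\<dots> = (\<integral>x. a1 x * Re (g x) + a2 x * Im (g x) \<partial>N)"
    using iN[OF a1m a1b] iN[OF a2m a2b] by (intro Bochner_Integration.integral_add[symmetric]) auto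
  also have "\<dots> \<le> (\<integral>x. norm (g x) \<partial>N)"
  proof (rule integral_mono)
    show "integrable N (\<lambda>x. a1 x * Re (g x) + a2 x * Im (g x))"
      using iN[OF a1m a1b] iN[OF a2m a2b] by (intro Bochner_Integration.integrable_add) auto
    show "integrable N (\<lambda>x. norm (g x))" using LG(4) by (rule integrable_norm)
    show "a1 x * Re (g x) + a2 x * Im (g x) \<le> norm (g x)" for x
      unfolding a1_def a2_def by (rule pt2)
  qed
  finally show ?thesis unfolding total_variation_def .
qed

lemma tv_unique:
  assumes L1: "laplace_repr M f F" and L2: "laplace_repr N g F"
  shows "total_variation M f = total_variation N g"
  using tv_le[OF L1 L2] tv_le[OF L2 L1] by simp

definition wN :: "real \<Rightarrow> real" where
  "wN x = indicator {-2..<0} x + exponential_density 1 x"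

definition psiN :: "real \<Rightarrow> real \<Rightarrow> real" where
  "psiN t x = (if x < -1 then 0 else if x < 0 then t else x)"

definition NN :: "real \<Rightarrow> real measure" where
  "NN t = distr (density lborel (\<lambda>x. ennreal (wN x))) borel (psiN t)"

lemma wN_nonneg: "0 \<le> wN x"
  unfolding wN_def by (auto simp: exponential_density_def)

lemma wN_meas[measurable]: "wN \<in> borel_measurable borel"
  unfolding wN_def exponential_density_def by measurable

lemma psiN_meas[measurable]: "psiN t \<in> borel_measurable borel"
  unfolding psiN_def by measurable

lemma NN_sets[simp, measurable_cong]: "sets (NN t) = sets borel"
  unfolding NN_def by simp

lemma NN_space[simp]: "space (NN t) = UNIV"
  unfolding NN_def by simp

lemma psiN_nonneg: "0 < t \<Longrightarrow> 0 \<le> psiN t x"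
  unfolding psiN_def by auto

lemma NN_neg: assumes "0 < t" shows "emeasure (NN t) {..<0} = 0"
proof -
  have "psiN t -` {..<0} \<inter> space (density lborel (\<lambda>x. ennreal (wN x))) = {}"
    using psiN_nonneg[OF assms] by (auto simp: not_less dest: leD)
  thus ?thesis unfolding NN_def by (subst emeasure_distr) auto
qed

lemma exp_dens_int: "integrable lborel (exponential_density 1)"
  and exp_dens_nn: "(\<integral>\<^sup>+x. ennreal (exponential_density 1 x) \<partial>lborel) = 1"
proof -
  interpret P: prob_space "density lborel (exponential_density 1)"
    by (rule prob_space_exponential_density) simp
  have m: "exponential_density 1 \<in> borel_measurable borel"
    unfolding exponential_density_def by measurable
  have "emeasure (density lborel (exponential_density 1)) UNIV = 1"
    using P.emeasure_space_1 by simp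
  thus nn: "(\<integral>\<^sup>+x. ennreal (exponential_density 1 x) \<partial>lborel) = 1"
    using m by (simp add: emeasure_density)
  show "integrable lborel (exponential_density 1)"
  proof (rule integrableI_nonneg)
    show "AE x in lborel. 0 \<le> exponential_density 1 x" by (simp add: exponential_density_nonneg)
    show "(\<integral>\<^sup>+x. ennreal (exponential_density 1 x) \<partial>lborel) < \<infinity>" using nn by simp
  qed (use m in simp)
qed

lemma NN_finite: "finite_measure (NN t)"
proof (rule finite_measureI)
  have "emeasure (NN t) (space (NN t)) = emeasure (density lborel (\<lambda>x. ennreal (wN x))) UNIV"
    unfolding NN_def by (subst emeasure_distr) auto
  also have "\<dots> = (\<integral>\<^sup>+x. ennreal (wN x) \<partial>lborel)"
    by (subst emeasure_density) auto
  also have "\<dots> = (\<integral>\<^sup>+x. ennreal (indicator {-2..<0} x) + ennreal (exponential_density 1 x) \<partial>lborel)"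
    unfolding wN_def by (intro nn_integral_cong ennreal_plus) (auto simp: exponential_density_def)
  also have "\<dots> = (\<integral>\<^sup>+x. ennreal (indicator {-2..<0} (x::real)) \<partial>lborel) + (\<integral>\<^sup>+x. ennreal (exponential_density 1 x) \<partial>lborel)"
    by (rule nn_integral_add) (auto simp: exponential_density_def)
  also have "\<dots> = 2 + 1"
    by (simp add: exp_dens_nn ennreal_indicator nn_integral_indicator)
  finally show "emeasure (NN t) (space (NN t)) \<noteq> \<infinity>" by simp
qed

lemma wN_split:
  fixes \<phi> :: "real \<Rightarrow> 'b::real_vector" and x :: real
  assumes "0 < t"
  shows "wN x *\<^sub>R \<phi> (psiN t x) = indicator {-2..<-1} x *\<^sub>R \<phi> 0 + indicator {-1..<0} x *\<^sub>R \<phi> t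
     + exponential_density 1 x *\<^sub>R \<phi> x"
  unfolding wN_def psiN_def exponential_density_def
  by (cases "x < -2"; cases "x < -1"; cases "x < 0") (auto simp: indicator_def)

lemma NN_integral:
  fixes \<phi> :: "real \<Rightarrow> 'b::{banach, second_countable_topology}"
  assumes t: "0 < t" and m: "\<phi> \<in> borel_measurable borel"
    and i: "integrable lborel (\<lambda>x. exponential_density 1 x *\<^sub>R \<phi> x)"
  shows "integrable (NN t) \<phi>"
    "integral\<^sup>L (NN t) \<phi> = \<phi> 0 + \<phi> t + (\<integral>x. exponential_density 1 x *\<^sub>R \<phi> x \<partial>lborel)"
proof -
  have i1: "integrable lborel (\<lambda>x::real. indicator {-2..<-1} x *\<^sub>R \<phi> 0)"
    by (intro integrable_scaleR_left integrable_real_indicator) auto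
  have i2: "integrable lborel (\<lambda>x::real. indicator {-1..<0} x *\<^sub>R \<phi> t)"
    by (intro integrable_scaleR_left integrable_real_indicator) auto
  have eqf: "(\<lambda>x. wN x *\<^sub>R \<phi> (psiN t x)) = (\<lambda>x::real. indicator {-2..<-1} x *\<^sub>R \<phi> 0 + indicator {-1..<0} x *\<^sub>R \<phi> t
     + exponential_density 1 x *\<^sub>R \<phi> x)"
    using wN_split[OF t] by auto
  have iK: "integrable lborel (\<lambda>x. wN x *\<^sub>R \<phi> (psiN t x))"
    unfolding eqf using i1 i2 i by (intro Bochner_Integration.integrable_add)
  show "integrable (NN t) \<phi>"
    unfolding NN_def using iK m wN_nonneg
    by (subst integrable_distr_eq) (auto simp: integrable_density)
  have "integral\<^sup>L (NN t) \<phi> = (\<integral>x. wN x *\<^sub>R \<phi> (psiN t x) \<partial>lborel)"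
    unfolding NN_def using m wN_nonneg
    by (subst integral_distr) (auto simp: integral_density)
  also have "\<dots> = (\<integral>x. indicator {-2..<-1} (x::real) *\<^sub>R \<phi> 0 \<partial>lborel) + (\<integral>x. indicator {-1..<0} (x::real) *\<^sub>R \<phi> t \<partial>lborel)
     + (\<integral>x. exponential_density 1 x *\<^sub>R \<phi> x \<partial>lborel)"
    unfolding eqf using i1 i2 i
    by (subst Bochner_Integration.integral_add; (intro Bochner_Integration.integrable_add)?; (subst Bochner_Integration.integral_add)?) auto
  also have "\<dots> = \<phi> 0 + \<phi> t + (\<integral>x. exponential_density 1 x *\<^sub>R \<phi> x \<partial>lborel)"
    by simp
  finally show "integral\<^sup>L (NN t) \<phi> = \<phi> 0 + \<phi> t + (\<integral>x. exponential_density 1 x *\<^sub>R \<phi> x \<partial>lborel)" .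
qed

lemma exp_vderiv:
  fixes z :: complex
  shows "((\<lambda>x. - exp (- (complex_of_real x * z)) / z) has_vector_derivative
     (- exp (- (complex_of_real x * z)) * (- z) / z)) (at x within S)"
proof -
  have "((\<lambda>w. - exp (- (w * z)) / z) has_field_derivative (- exp (- (complex_of_real x * z)) * (- z) / z)) (at (complex_of_real x))"
    by (auto intro!: derivative_eq_intros)
  from has_vector_derivative_real_field[OF this] show ?thesis .
qed

lemma exp_interval_integral:
  fixes z :: complex and \<alpha> \<beta> :: real
  assumes ab: "\<alpha> \<le> \<beta>" and z: "z \<noteq> 0"
  shows "integrable lborel (\<lambda>x. indicator {\<alpha>..\<beta>} x *\<^sub>R exp (- (complex_of_real x * z)))"
    "(\<integral>x. indicator {\<alpha>..\<beta>} x *\<^sub>R exp (- (complex_of_real x * z)) \<partial>lborel)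
       = (exp (- (complex_of_real \<alpha> * z)) - exp (- (complex_of_real \<beta> * z))) / z"
proof -
  have c: "continuous_on {\<alpha>..\<beta>} (\<lambda>x. exp (- (complex_of_real x * z)))"
    by (intro continuous_intros)
  show "integrable lborel (\<lambda>x. indicator {\<alpha>..\<beta>} x *\<^sub>R exp (- (complex_of_real x * z)))"
    using borel_integrable_atLeastAtMost'[OF c] unfolding set_integrable_def .
  have "(CLBINT x=\<alpha>..\<beta>. exp (- (complex_of_real x * z))) =
     (- exp (- (complex_of_real \<beta> * z)) / z) - (- exp (- (complex_of_real \<alpha> * z)) / z)"
  proof (rule interval_integral_FTC_finite)
    show "continuous_on {min \<alpha> \<beta>..max \<alpha> \<beta>} (\<lambda>x. exp (- (complex_of_real x * z)))"
      by (intro continuous_intros)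
    fix x
    show "((\<lambda>x. - exp (- (complex_of_real x * z)) / z) has_vector_derivative exp (- (complex_of_real x * z)))
        (at x within {min \<alpha> \<beta>..max \<alpha> \<beta>})"
      using exp_vderiv[where x=x and z=z] z by simp
  qed
  moreover have "(CLBINT x=\<alpha>..\<beta>. exp (- (complex_of_real x * z))) = (CLBINT x:{\<alpha>..\<beta>}. exp (- (complex_of_real x * z)))"
    using ab by (rule interval_integral_Icc)
  ultimately show "(\<integral>x. indicator {\<alpha>..\<beta>} x *\<^sub>R exp (- (complex_of_real x * z)) \<partial>lborel)
       = (exp (- (complex_of_real \<alpha> * z)) - exp (- (complex_of_real \<beta> * z))) / z"
    unfolding set_lebesgue_integral_def by (simp add: diff_divide_distrib)
qed


definition kern :: "real \<Rightarrow> real \<Rightarrow> real \<Rightarrow> real" where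
  "kern t s x = (if 0 < s then (if 0 \<le> x \<and> x \<le> t then 1 else 0) - (if s \<le> x \<and> x \<le> s + t then 1 else 0) else 0)"

lemma kern_meas[measurable]: "(\<lambda>p. kern t (fst p) (snd p)) \<in> borel_measurable (borel \<Otimes>\<^sub>M borel)"
  unfolding kern_def by measurable

lemma kern_meas2[measurable]: "kern t s \<in> borel_measurable borel"
  unfolding kern_def by measurable

lemma kern_ind: "0 < s \<Longrightarrow> kern t s x = indicator {0..t} x - indicator {s..s+t} x"
  unfolding kern_def by (simp add: indicator_def)

lemma kern_neg: "x < 0 \<Longrightarrow> kern t s x = 0"
  unfolding kern_def by auto

lemma kern_nonneg: "x \<le> t \<Longrightarrow> 0 \<le> kern t s x"
  unfolding kern_def by auto

lemma kern_nonpos: "t < x \<Longrightarrow> kern t s x \<le> 0"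
  unfolding kern_def by auto

lemma kern_s_nonpos: "\<not> 0 < s \<Longrightarrow> kern t s x = 0"
  unfolding kern_def by auto

lemma kern_abs:
  assumes "0 < s" "0 < t"
  shows "\<bar>kern t s x\<bar> = indicator {0..t} x + indicator {s..s+t} x - 2 * indicator {s..t} x"
  using assms unfolding kern_def by (auto simp: indicator_def)

lemma kern_abs_int:
  assumes s: "0 < s" and t: "0 < t"
  shows "integrable lborel (\<lambda>x. \<bar>kern t s x\<bar>)" "(\<integral>x. \<bar>kern t s x\<bar> \<partial>lborel) = 2 * min s t"
proof -
  have i1: "integrable lborel (indicator {0..t} :: real \<Rightarrow> real)" by (intro integrable_real_indicator) (use t in auto)
  have i2: "integrable lborel (indicator {s..s+t} :: real \<Rightarrow> real)" by (intro integrable_real_indicator) (use t in auto)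
  have i3: "integrable lborel (indicator {s..t} :: real \<Rightarrow> real)" by (intro integrable_real_indicator) (auto simp: emeasure_lborel_Icc_eq)
  have eq: "(\<lambda>x. \<bar>kern t s x\<bar>) = (\<lambda>x. indicator {0..t} x + indicator {s..s+t} x - 2 * indicator {s..t} x)"
    using kern_abs[OF s t] by auto
  show "integrable lborel (\<lambda>x. \<bar>kern t s x\<bar>)" unfolding eq using i1 i2 i3 by auto
  have m3: "measure lborel {s..t} = (if s \<le> t then t - s else 0)" by auto
  have "(\<integral>x. \<bar>kern t s x\<bar> \<partial>lborel) = measure lborel {0..t} + measure lborel {s..s+t} - 2 * measure lborel {s..t}"
    unfolding eq using i1 i2 i3
    by (subst Bochner_Integration.integral_diff; (subst Bochner_Integration.integral_add)?) auto
  also have "\<dots> = 2 * min s t" using t s by (simp add: m3)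
  finally show "(\<integral>x. \<bar>kern t s x\<bar> \<partial>lborel) = 2 * min s t" .
qed

lemma kern_exp_int:
  fixes z :: complex
  assumes s: "0 < s" and t: "0 < t" and z: "z \<noteq> 0"
  shows "integrable lborel (\<lambda>x. kern t s x *\<^sub>R exp (- (complex_of_real x * z)))"
    "(\<integral>x. kern t s x *\<^sub>R exp (- (complex_of_real x * z)) \<partial>lborel)
       = (1 - exp (- (complex_of_real t * z))) / z * (1 - exp (- (complex_of_real s * z)))"
proof -
  note A = exp_interval_integral[of 0 t z]
  note B = exp_interval_integral[of s "s + t" z]
  have eq: "(\<lambda>x. kern t s x *\<^sub>R exp (- (complex_of_real x * z))) =
     (\<lambda>x. indicator {0..t} x *\<^sub>R exp (- (complex_of_real x * z)) - indicator {s..s+t} x *\<^sub>R exp (- (complex_of_real x * z)))"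
    by (simp add: fun_eq_iff kern_ind[OF s] scaleR_diff_left)
  show "integrable lborel (\<lambda>x. kern t s x *\<^sub>R exp (- (complex_of_real x * z)))"
    unfolding eq using A(1) B(1) t z by auto
  have "(\<integral>x. kern t s x *\<^sub>R exp (- (complex_of_real x * z)) \<partial>lborel)
      = (exp (- (complex_of_real 0 * z)) - exp (- (complex_of_real t * z))) / z
        - (exp (- (complex_of_real s * z)) - exp (- (complex_of_real (s + t) * z))) / z"
    unfolding eq using A B t z by (subst Bochner_Integration.integral_diff) auto
  also have "\<dots> = (1 - exp (- (complex_of_real t * z))) / z * (1 - exp (- (complex_of_real s * z)))"
  proof -
    have "exp (- (complex_of_real (s + t) * z)) = exp (- (complex_of_real s * z)) * exp (- (complex_of_real t * z))"
      by (simp add: distrib_right exp_add[symmetric] algebra_simps)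
    thus ?thesis using z by (simp add: field_simps)
  qed
  finally show "(\<integral>x. kern t s x *\<^sub>R exp (- (complex_of_real x * z)) \<partial>lborel)
       = (1 - exp (- (complex_of_real t * z))) / z * (1 - exp (- (complex_of_real s * z)))" .
qed

context
  fixes \<mu> :: "real measure" and t :: real
  assumes L: "levy_measure \<mu>" and t: "0 < t"
begin

lemma mu_sets[simp, measurable_cong]: "sets \<mu> = sets borel"
  using L unfolding levy_measure_def by simp

lemma mu_space[simp]: "space \<mu> = UNIV"
  using sets_eq_imp_space_eq[OF mu_sets] by simp

lemma mu_AE_pos: "AE s in \<mu>. 0 < s"
proof (rule AE_I[where N="{..0}"])
  show "{x \<in> space \<mu>. \<not> 0 < x} \<subseteq> {..0}" by auto
  show "emeasure \<mu> {..0} = 0" using L unfolding levy_measure_def by simp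
qed simp

lemma mu_int: "integrable \<mu> (\<lambda>s. s / (1 + s))"
  using L unfolding levy_measure_def by simp

lemma mu_sigma_finite: "sigma_finite_measure \<mu>"
  unfolding sigma_finite_measure_def
proof (intro exI conjI)
  let ?A = "insert {..0} (range (\<lambda>n::nat. {inverse (real (Suc n))<..}))"
  show "countable ?A" by simp
  show "?A \<subseteq> sets \<mu>" by auto
  show "\<Union> ?A = space \<mu>"
  proof -
    have "x \<in> \<Union> ?A" for x :: real
    proof (cases "x \<le> 0")
      case False
      then obtain n where "inverse (real (Suc n)) < x" using reals_Archimedean[of x] by auto
      thus ?thesis by auto
    qed auto
    thus ?thesis by auto
  qed
  show "\<forall>a\<in>?A. emeasure \<mu> a \<noteq> \<infinity>"
  proof
    fix a assume "a \<in> ?A"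
    then consider "a = {..0}" | n where "a = {inverse (real (Suc n))<..}" by auto
    thus "emeasure \<mu> a \<noteq> \<infinity>"
    proof cases
      case 1
      thus ?thesis using L unfolding levy_measure_def by simp
    next
      case (2 n)
      have "emeasure \<mu> a = (\<integral>\<^sup>+s. indicator a s \<partial>\<mu>)" using 2 by simp
      also have "\<dots> \<le> (\<integral>\<^sup>+s. ennreal (real (Suc (Suc n))) * ennreal (norm (s / (1 + s))) \<partial>\<mu>)"
      proof (rule nn_integral_mono)
        fix s
        show "indicator a s \<le> ennreal (real (Suc (Suc n))) * ennreal (norm (s / (1 + s)))"
        proof (cases "s \<in> a")
          case True
          hence s: "inverse (real (Suc n)) < s" using 2 by simp
          have sp: "0 < s" using s by (smt (verit) inverse_positive_iff_positive of_nat_0_less_iff zero_less_Suc)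
          have "1 \<le> real (Suc (Suc n)) * (s / (1 + s))"
          proof -
            have "1 < real (Suc n) * s" using s
              by (metis of_nat_0_less_iff zero_less_Suc inverse_eq_divide pos_divide_less_eq mult.commute)
            hence "1 + s \<le> real (Suc (Suc n)) * s" by (simp add: algebra_simps)
            thus ?thesis using sp by (simp add: field_simps)
          qed
          hence "1 \<le> real (Suc (Suc n)) * norm (s / (1 + s))" using sp by simp
          hence "ennreal 1 \<le> ennreal (real (Suc (Suc n)) * norm (s / (1 + s)))" by (rule ennreal_leI)
          moreover have "ennreal (real (Suc (Suc n))) * ennreal (norm (s / (1 + s))) = ennreal (real (Suc (Suc n)) * norm (s / (1 + s)))"
            by (rule ennreal_mult[symmetric]) auto
          ultimately show ?thesis using True by simp
        qed simp
      qed
      also have "\<dots> = ennreal (real (Suc (Suc n))) * (\<integral>\<^sup>+s. ennreal (norm (s / (1 + s))) \<partial>\<mu>)"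
        by (rule nn_integral_cmult) simp
      also have "\<dots> < \<infinity>"
      proof -
        have fin: "(\<integral>\<^sup>+s. ennreal (norm (s / (1 + s))) \<partial>\<mu>) < \<infinity>"
          using mu_int unfolding integrable_iff_bounded by simp
        show ?thesis unfolding ennreal_mult_less_top infinity_ennreal_def using fin by auto
      qed
      finally show ?thesis by simp
    qed
  qed
qed

lemma mu_pair: "pair_sigma_finite \<mu> lborel"
  by (intro pair_sigma_finite.intro mu_sigma_finite sigma_finite_lborel)

lemma min_bound: "0 < s \<Longrightarrow> min (s / t) 1 \<le> ((1 + t) / t) * (s / (1 + s))"
proof -
  assume s: "0 < s"
  have "min s t \<le> (1 + t) * s / (1 + s)"
  proof (cases "s \<le> t")
    case True thus ?thesis using s t by (simp add: field_simps)
  next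
    case False thus ?thesis using s t by (simp add: field_simps)
  qed
  hence "min s t / t \<le> ((1 + t) * s / (1 + s)) / t" using t by (rule divide_right_mono[OF _ less_imp_le])
  moreover have "min (s / t) 1 = min s t / t" using t by (auto simp: min_def field_simps)
  moreover have "((1 + t) / t) * (s / (1 + s)) = ((1 + t) * s / (1 + s)) / t" by simp
  ultimately show ?thesis by metis
qed

lemma mu_int_min: "integrable \<mu> (\<lambda>s. min (s / t) 1)"
proof (rule Bochner_Integration.integrable_bound[where f="\<lambda>s. ((1 + t) / t) * (s / (1 + s))"])
  show "integrable \<mu> (\<lambda>s. ((1 + t) / t) * (s / (1 + s)))" by (rule integrable_mult_right) (rule mu_int)
  show "(\<lambda>s. min (s / t) 1) \<in> borel_measurable \<mu>" by simp
  show "AE s in \<mu>. norm (min (s / t) 1) \<le> norm (((1 + t) / t) * (s / (1 + s)))"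
    using mu_AE_pos
  proof eventually_elim
    case (elim s)
    have a: "0 \<le> min (s / t) 1" using elim t by simp
    have b: "0 \<le> ((1 + t) / t) * (s / (1 + s))" using elim t by simp
    show ?case using min_bound[OF elim] a b by (simp only: real_norm_def abs_of_nonneg)
  qed
qed

end

definition kint :: "real measure \<Rightarrow> real \<Rightarrow> real \<Rightarrow> real" where
  "kint \<mu> t x = (\<integral>s. kern t s x \<partial>\<mu>)"

lemma kern_meas3[measurable]: "(\<lambda>s. kern t s x) \<in> borel_measurable borel"
  unfolding kern_def by measurable

lemma kern_meas_swap[measurable]: "(\<lambda>p. kern t (snd p) (fst p)) \<in> borel_measurable (borel \<Otimes>\<^sub>M borel)"
  unfolding kern_def by measurable

lemma exp_meas_fst[measurable]: "(\<lambda>p. exp (- (complex_of_real (fst p) * z))) \<in> borel_measurable (borel \<Otimes>\<^sub>M borel)"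
proof -
  have "(\<lambda>x::real. exp (- (complex_of_real x * z))) \<in> borel_measurable borel"
    by (intro borel_measurable_continuous_onI continuous_intros)
  from measurable_compose[OF measurable_fst this] show ?thesis by (simp add: comp_def)
qed

lemma exp_meas_snd[measurable]: "(\<lambda>p. exp (- (complex_of_real (snd p) * z))) \<in> borel_measurable (borel \<Otimes>\<^sub>M borel)"
proof -
  have "(\<lambda>x::real. exp (- (complex_of_real x * z))) \<in> borel_measurable borel"
    by (intro borel_measurable_continuous_onI continuous_intros)
  from measurable_compose[OF measurable_snd this] show ?thesis by (simp add: comp_def)
qed

context
  fixes \<mu> :: "real measure" and t :: real
  assumes L: "levy_measure \<mu>" and t: "0 < t"
begin

lemma prod_sets: "sets (\<mu> \<Otimes>\<^sub>M lborel) = sets (borel \<Otimes>\<^sub>M borel)"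
  by (rule sets_pair_measure_cong) (simp_all add: mu_sets[OF L t])

lemma prod_sets2: "sets (lborel \<Otimes>\<^sub>M \<mu>) = sets (borel \<Otimes>\<^sub>M borel)"
  by (rule sets_pair_measure_cong) (simp_all add: mu_sets[OF L t])

lemma kabs_meas: "(\<lambda>p. \<bar>kern t (fst p) (snd p)\<bar>) \<in> borel_measurable (\<mu> \<Otimes>\<^sub>M lborel)"
  unfolding measurable_cong_sets[OF prod_sets refl] by measurable

lemma kabs_inner: "(\<integral>x. \<bar>kern t s x\<bar> \<partial>lborel) = (if 0 < s then 2 * min s t else 0)"
  using kern_abs_int(2)[OF _ t, of s] kern_s_nonpos[of s t] by auto

lemma kabs_prod_int: "integrable (\<mu> \<Otimes>\<^sub>M lborel) (\<lambda>p. \<bar>kern t (fst p) (snd p)\<bar>)"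
proof -
  interpret P: pair_sigma_finite \<mu> lborel by (rule mu_pair[OF L t])
  show ?thesis
  proof (rule P.Fubini_integrable)
    show "(\<lambda>p. \<bar>kern t (fst p) (snd p)\<bar>) \<in> borel_measurable (\<mu> \<Otimes>\<^sub>M lborel)" by (rule kabs_meas)
    have eq: "(\<lambda>s. \<integral>x. norm \<bar>kern t (fst (s, x)) (snd (s, x))\<bar> \<partial>lborel) = (\<lambda>s. if 0 < s then 2 * min s t else 0)"
      using kabs_inner by auto
    have "integrable \<mu> (\<lambda>s. (2 * t) * min (s / t) 1)"
      by (rule integrable_mult_right) (rule mu_int_min[OF L t])
    moreover have "AE s in \<mu>. (2 * t) * min (s / t) 1 = (if 0 < s then 2 * min s t else 0)"
      using mu_AE_pos[OF L t]
    proof eventually_elim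
      case (elim s)
      show ?case using elim t by (auto simp: min_def field_simps)
    qed
    moreover have "integrable \<mu> (\<lambda>s. (2 * t) * min (s / t) 1) = integrable \<mu> (\<lambda>s. if 0 < s then 2 * min s t else 0)"
    proof (rule integrable_cong_AE)
      show "(\<lambda>s. (2 * t) * min (s / t) 1) \<in> borel_measurable \<mu>" unfolding meas_cong_borel[OF mu_sets[OF L t]] by measurable
      show "(\<lambda>s. if 0 < s then 2 * min s t else 0) \<in> borel_measurable \<mu>" unfolding meas_cong_borel[OF mu_sets[OF L t]] by measurable
    qed fact
    ultimately have "integrable \<mu> (\<lambda>s. if 0 < s then 2 * min s t else 0)"
      by simp
    thus "integrable \<mu> (\<lambda>s. \<integral>x. norm \<bar>kern t (fst (s, x)) (snd (s, x))\<bar> \<partial>lborel)"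
      unfolding eq .
    show "AE s in \<mu>. integrable lborel (\<lambda>x. \<bar>kern t (fst (s, x)) (snd (s, x))\<bar>)"
      using mu_AE_pos[OF L t] by eventually_elim (simp add: kern_abs_int(1)[OF _ t])
  qed
qed

lemma kexp_prod_int:
  fixes z :: complex
  assumes z: "0 \<le> Re z"
  shows "integrable (\<mu> \<Otimes>\<^sub>M lborel) (\<lambda>p. kern t (fst p) (snd p) *\<^sub>R exp (- (complex_of_real (snd p) * z)))"
proof (rule Bochner_Integration.integrable_bound[OF kabs_prod_int])
  show "(\<lambda>p. kern t (fst p) (snd p) *\<^sub>R exp (- (complex_of_real (snd p) * z))) \<in> borel_measurable (\<mu> \<Otimes>\<^sub>M lborel)"
    unfolding measurable_cong_sets[OF prod_sets refl] by measurable
  show "AE p in \<mu> \<Otimes>\<^sub>M lborel. norm (kern t (fst p) (snd p) *\<^sub>R exp (- (complex_of_real (snd p) * z))) \<le> norm \<bar>kern t (fst p) (snd p)\<bar>"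
  proof (rule AE_I2)
    fix p :: "real \<times> real"
    obtain s x where p: "p = (s, x)" by fastforce
    show "norm (kern t (fst p) (snd p) *\<^sub>R exp (- (complex_of_real (snd p) * z))) \<le> norm \<bar>kern t (fst p) (snd p)\<bar>"
    proof (cases "x < 0")
      case True thus ?thesis using p kern_neg by simp
    next
      case False
      have e1: "exp (- (x * Re z)) \<le> 1" using False z by simp
      have "\<bar>kern t s x\<bar> * exp (- (x * Re z)) \<le> \<bar>kern t s x\<bar>"
        by (rule mult_right_le_one_le) (use e1 in auto)
      thus ?thesis using p by (simp add: norm_exp_eq_Re)
    qed
  qed
qed

lemma kint_meas[measurable]: "kint \<mu> t \<in> borel_measurable borel"
proof -
  interpret S: sigma_finite_measure \<mu> by (rule mu_sigma_finite[OF L t])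
  have "(\<lambda>(x, s). kern t s x) \<in> borel_measurable (borel \<Otimes>\<^sub>M \<mu>)"
    unfolding measurable_cong_sets[OF sets_pair_measure_cong[OF refl mu_sets[OF L t]] refl] by measurable
  from S.borel_measurable_lebesgue_integral[OF this] show ?thesis
    unfolding kint_def by simp
qed

lemma kabs_fub:
  shows "integrable lborel (\<lambda>x. \<integral>s. \<bar>kern t s x\<bar> \<partial>\<mu>)"
    "(\<integral>x. (\<integral>s. \<bar>kern t s x\<bar> \<partial>\<mu>) \<partial>lborel) = 2 * t * (\<integral>s. min (s / t) 1 \<partial>\<mu>)"
proof -
  interpret P: pair_sigma_finite \<mu> lborel by (rule mu_pair[OF L t])
  have I: "integrable (\<mu> \<Otimes>\<^sub>M lborel) (\<lambda>(s, x). \<bar>kern t s x\<bar>)"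
    using kabs_prod_int unfolding case_prod_beta' .
  show "integrable lborel (\<lambda>x. \<integral>s. \<bar>kern t s x\<bar> \<partial>\<mu>)"
    by (rule P.integrable_snd[OF I])
  have "(\<integral>x. (\<integral>s. \<bar>kern t s x\<bar> \<partial>\<mu>) \<partial>lborel) = (\<integral>s. (\<integral>x. \<bar>kern t s x\<bar> \<partial>lborel) \<partial>\<mu>)"
    by (rule P.Fubini_integral[OF I])
  also have "\<dots> = (\<integral>s. (if 0 < s then 2 * min s t else 0) \<partial>\<mu>)"
    by (simp add: kabs_inner)
  also have "\<dots> = (\<integral>s. (2 * t) * min (s / t) 1 \<partial>\<mu>)"
  proof (rule integral_cong_AE)
    show "(\<lambda>s. (2 * t) * min (s / t) 1) \<in> borel_measurable \<mu>" unfolding meas_cong_borel[OF mu_sets[OF L t]] by measurable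
    show "(\<lambda>s. if 0 < s then 2 * min s t else 0) \<in> borel_measurable \<mu>" unfolding meas_cong_borel[OF mu_sets[OF L t]] by measurable
    show "AE s in \<mu>. (if 0 < s then 2 * min s t else 0) = (2 * t) * min (s / t) 1"
      using mu_AE_pos[OF L t]
    proof eventually_elim
      case (elim s)
      show ?case using elim t by (auto simp: min_def field_simps)
    qed
  qed
  also have "\<dots> = 2 * t * (\<integral>s. min (s / t) 1 \<partial>\<mu>)" by simp
  finally show "(\<integral>x. (\<integral>s. \<bar>kern t s x\<bar> \<partial>\<mu>) \<partial>lborel) = 2 * t * (\<integral>s. min (s / t) 1 \<partial>\<mu>)" .
qed

lemma kint_abs: "\<bar>kint \<mu> t x\<bar> = (\<integral>s. \<bar>kern t s x\<bar> \<partial>\<mu>)"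
proof (cases "x \<le> t")
  case True
  have "(\<integral>s. \<bar>kern t s x\<bar> \<partial>\<mu>) = kint \<mu> t x"
    unfolding kint_def using kern_nonneg[OF True] by (intro Bochner_Integration.integral_cong) auto
  moreover have "0 \<le> kint \<mu> t x" unfolding kint_def using kern_nonneg[OF True] by (intro Bochner_Integration.integral_nonneg) auto
  ultimately show ?thesis by simp
next
  case False
  hence F: "t < x" by simp
  have "(\<integral>s. \<bar>kern t s x\<bar> \<partial>\<mu>) = (\<integral>s. - kern t s x \<partial>\<mu>)"
    using kern_nonpos[OF F] by (intro Bochner_Integration.integral_cong) auto
  also have "\<dots> = - kint \<mu> t x" unfolding kint_def by simp
  finally have e: "(\<integral>s. \<bar>kern t s x\<bar> \<partial>\<mu>) = - kint \<mu> t x" .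
  moreover have "0 \<le> (\<integral>s. \<bar>kern t s x\<bar> \<partial>\<mu>)" by (intro Bochner_Integration.integral_nonneg) auto
  ultimately show ?thesis by simp
qed

lemma kint_int: "integrable lborel (kint \<mu> t)"
proof (rule Bochner_Integration.integrable_bound[OF kabs_fub(1)])
  show "kint \<mu> t \<in> borel_measurable lborel" by simp
  show "AE x in lborel. norm (kint \<mu> t x) \<le> norm (\<integral>s. \<bar>kern t s x\<bar> \<partial>\<mu>)"
    by (rule AE_I2) (simp add: kint_abs)
qed

lemma kint_laplace:
  fixes z :: complex
  assumes z: "0 < Re z"
  shows "integrable lborel (\<lambda>x. kint \<mu> t x *\<^sub>R exp (- (complex_of_real x * z)))"
    "(\<integral>x. kint \<mu> t x *\<^sub>R exp (- (complex_of_real x * z)) \<partial>lborel)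
       = (1 - exp (- (complex_of_real t * z))) / z * (\<integral>s. (1 - exp (- (complex_of_real s * z))) \<partial>\<mu>)"
proof -
  interpret P: pair_sigma_finite \<mu> lborel by (rule mu_pair[OF L t])
  have z0: "z \<noteq> 0" using z by auto
  define F where "F s x = kern t s x *\<^sub>R exp (- (complex_of_real x * z))" for s x
  have I: "integrable (\<mu> \<Otimes>\<^sub>M lborel) (\<lambda>(s, x). F s x)"
    using kexp_prod_int[of z] z unfolding F_def case_prod_beta' by simp
  have Iabs: "integrable (\<mu> \<Otimes>\<^sub>M lborel) (\<lambda>(s, x). \<bar>kern t s x\<bar>)"
    using kabs_prod_int unfolding case_prod_beta' .
  have Fm: "(\<lambda>x. \<integral>s. F s x \<partial>\<mu>) \<in> borel_measurable lborel"
  proof -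
    have "(\<lambda>(x, s). F s x) \<in> borel_measurable (lborel \<Otimes>\<^sub>M \<mu>)"
      unfolding measurable_cong_sets[OF prod_sets2 refl] F_def by measurable
    from sigma_finite_measure.borel_measurable_lebesgue_integral[OF mu_sigma_finite[OF L t] this] show ?thesis by simp
  qed
  have em: "(\<lambda>x::real. exp (- (complex_of_real x * z))) \<in> borel_measurable borel"
    by (intro borel_measurable_continuous_onI continuous_intros)
  have Km: "(\<lambda>x. kint \<mu> t x *\<^sub>R exp (- (complex_of_real x * z))) \<in> borel_measurable lborel"
    unfolding meas_cong_borel[OF sets_lborel] using em by measurable
  have AEeq: "AE x in lborel. (\<integral>s. F s x \<partial>\<mu>) = kint \<mu> t x *\<^sub>R exp (- (complex_of_real x * z))"
    using P.AE_integrable_snd[OF Iabs]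
  proof eventually_elim
    case (elim x)
    have "integrable \<mu> (\<lambda>s. kern t s x)"
      using elim by (subst integrable_abs_iff[symmetric]) (auto simp: meas_cong_borel[OF mu_sets[OF L t]] kern_meas3)
    thus ?case unfolding F_def kint_def by simp
  qed
  have intF: "integrable lborel (\<lambda>x. \<integral>s. F s x \<partial>\<mu>)" by (rule P.integrable_snd[OF I])
  show "integrable lborel (\<lambda>x. kint \<mu> t x *\<^sub>R exp (- (complex_of_real x * z)))"
    using intF by (subst integrable_cong_AE[OF Km Fm]) (use AEeq in \<open>auto elim: AE_mp\<close>)
  have "(\<integral>x. kint \<mu> t x *\<^sub>R exp (- (complex_of_real x * z)) \<partial>lborel) = (\<integral>x. (\<integral>s. F s x \<partial>\<mu>) \<partial>lborel)"
    by (rule integral_cong_AE[OF Km Fm]) (use AEeq in \<open>auto elim: AE_mp\<close>)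
  also have "\<dots> = (\<integral>s. (\<integral>x. F s x \<partial>lborel) \<partial>\<mu>)"
    by (rule P.Fubini_integral[OF I])
  also have "\<dots> = (\<integral>s. (1 - exp (- (complex_of_real t * z))) / z * (1 - exp (- (complex_of_real s * z))) \<partial>\<mu>)"
  proof (rule integral_cong_AE)
    have "(\<lambda>(s, x). F s x) \<in> borel_measurable (\<mu> \<Otimes>\<^sub>M lborel)"
      unfolding measurable_cong_sets[OF prod_sets refl] F_def by measurable
    from lborel.borel_measurable_lebesgue_integral[OF this]
    show "(\<lambda>s. \<integral>x. F s x \<partial>lborel) \<in> borel_measurable \<mu>" by simp
    show "(\<lambda>s. (1 - exp (- (complex_of_real t * z))) / z * (1 - exp (- (complex_of_real s * z)))) \<in> borel_measurable \<mu>"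
      unfolding meas_cong_borel[OF mu_sets[OF L t]] by measurable
    show "AE s in \<mu>. (\<integral>x. F s x \<partial>lborel) = (1 - exp (- (complex_of_real t * z))) / z * (1 - exp (- (complex_of_real s * z)))"
      using mu_AE_pos[OF L t] by eventually_elim (simp add: F_def kern_exp_int(2)[OF _ t z0])
  qed
  also have "\<dots> = (1 - exp (- (complex_of_real t * z))) / z * (\<integral>s. (1 - exp (- (complex_of_real s * z))) \<partial>\<mu>)"
    by (rule integral_mult_right_zero)
  finally show "(\<integral>x. kint \<mu> t x *\<^sub>R exp (- (complex_of_real x * z)) \<partial>lborel)
       = (1 - exp (- (complex_of_real t * z))) / z * (\<integral>s. (1 - exp (- (complex_of_real s * z))) \<partial>\<mu>)" .
qed

end

definition rhoF :: "real \<Rightarrow> real \<Rightarrow> real measure \<Rightarrow> real \<Rightarrow> real" where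
  "rhoF a t \<mu> x = (a * indicator {0..t} x + kint \<mu> t x) / t"

definition gN :: "real \<Rightarrow> real \<Rightarrow> real \<Rightarrow> real measure \<Rightarrow> real \<Rightarrow> complex" where
  "gN a b t \<mu> y = (if y = 0 then complex_of_real (b / t) else if y = t then complex_of_real (- (b / t))
     else complex_of_real (rhoF a t \<mu> y * exp y))"

context
  fixes \<mu> :: "real measure" and t a b :: real
  assumes L: "levy_measure \<mu>" and t: "0 < t" and a: "0 \<le> a" and b: "0 \<le> b"
begin

lemma rho_meas[measurable]: "rhoF a t \<mu> \<in> borel_measurable borel"
  unfolding rhoF_def using kint_meas[OF L t] by measurable

lemma g_meas[measurable]: "gN a b t \<mu> \<in> borel_measurable borel"
  unfolding gN_def by measurable

lemma kint_neg: "x < 0 \<Longrightarrow> kint \<mu> t x = 0"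
  unfolding kint_def by (simp add: kern_neg)

lemma rho_neg: "x < 0 \<Longrightarrow> rhoF a t \<mu> x = 0"
  unfolding rhoF_def by (simp add: kint_neg)

lemma rho_int: "integrable lborel (rhoF a t \<mu>)"
proof -
  have "integrable lborel (\<lambda>x. (a / t) * indicator {0..t} x + (1 / t) * kint \<mu> t x)"
    using kint_int[OF L t] t by (intro Bochner_Integration.integrable_add integrable_mult_right integrable_real_indicator) auto
  moreover have "(\<lambda>x. (a / t) * indicator {0..t} x + (1 / t) * kint \<mu> t x) = rhoF a t \<mu>"
    unfolding rhoF_def by (auto simp: fun_eq_iff add_divide_distrib)
  ultimately show ?thesis by simp
qed

lemma g_pointwise:
  fixes h :: "real \<Rightarrow> complex"
  assumes "x \<noteq> 0" "x \<noteq> t"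
  shows "exponential_density 1 x *\<^sub>R (h x * gN a b t \<mu> x) = rhoF a t \<mu> x *\<^sub>R h x"
proof (cases "x < 0")
  case True thus ?thesis using assms by (simp add: gN_def rho_neg exponential_density_def)
next
  case False
  have e: "complex_of_real (exp (- x)) * complex_of_real (exp x) = 1"
    by (simp add: of_real_mult[symmetric] exp_minus_inverse mult.commute)
  have "exponential_density 1 x *\<^sub>R (h x * gN a b t \<mu> x)
      = (complex_of_real (exp (- x)) * complex_of_real (exp x)) * (complex_of_real (rhoF a t \<mu> x) * h x)"
    using False assms by (simp add: gN_def exponential_density_def scaleR_conv_of_real algebra_simps)
  also have "\<dots> = rhoF a t \<mu> x *\<^sub>R h x" by (simp add: e scaleR_conv_of_real)
  finally show ?thesis .
qed

lemma g_pointwise_norm: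
  assumes "x \<noteq> 0" "x \<noteq> t"
  shows "exponential_density 1 x *\<^sub>R norm (gN a b t \<mu> x) = \<bar>rhoF a t \<mu> x\<bar>"
proof (cases "x < 0")
  case True thus ?thesis using assms by (simp add: gN_def rho_neg exponential_density_def)
next
  case False
  have "exp (- x) * (\<bar>rhoF a t \<mu> x\<bar> * exp x) = \<bar>rhoF a t \<mu> x\<bar>"
    by (simp add: exp_minus_inverse mult.commute mult.left_commute)
  thus ?thesis using False assms
    by (simp add: gN_def exponential_density_def norm_mult abs_mult)
qed

lemma g_real: "gN a b t \<mu> y = complex_of_real (Re (gN a b t \<mu> y))"
  unfolding gN_def by simp

lemma AE_not2: "AE x in lborel. x \<noteq> 0 \<and> x \<noteq> t"
  using AE_lborel_singleton[of 0] AE_lborel_singleton[of t] by eventually_elim auto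

lemma rho_laplace:
  fixes z :: complex
  assumes z: "0 < Re z"
  shows "integrable lborel (\<lambda>x. rhoF a t \<mu> x *\<^sub>R exp (- (complex_of_real x * z)))"
    "(\<integral>x. rhoF a t \<mu> x *\<^sub>R exp (- (complex_of_real x * z)) \<partial>lborel)
      = (a / t) *\<^sub>R ((1 - exp (- (complex_of_real t * z))) / z)
        + (1 / t) *\<^sub>R ((1 - exp (- (complex_of_real t * z))) / z * (\<integral>s. (1 - exp (- (complex_of_real s * z))) \<partial>\<mu>))"
proof -
  have z0: "z \<noteq> 0" using z by auto
  note A = exp_interval_integral[of 0 t z, OF less_imp_le[OF t] z0]
  note K = kint_laplace[OF L t z]
  have eq: "(\<lambda>x. rhoF a t \<mu> x *\<^sub>R exp (- (complex_of_real x * z))) =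
    (\<lambda>x. (a / t) *\<^sub>R (indicator {0..t} x *\<^sub>R exp (- (complex_of_real x * z)))
       + (1 / t) *\<^sub>R (kint \<mu> t x *\<^sub>R exp (- (complex_of_real x * z))))"
    unfolding rhoF_def by (auto simp: fun_eq_iff add_divide_distrib scaleR_add_left)
  have i1: "integrable lborel (\<lambda>x. (a / t) *\<^sub>R (indicator {0..t} x *\<^sub>R exp (- (complex_of_real x * z))))"
    by (rule integrable_scaleR_right) (rule A(1))
  have i2: "integrable lborel (\<lambda>x. (1 / t) *\<^sub>R (kint \<mu> t x *\<^sub>R exp (- (complex_of_real x * z))))"
    by (rule integrable_scaleR_right) (rule K(1))
  show "integrable lborel (\<lambda>x. rhoF a t \<mu> x *\<^sub>R exp (- (complex_of_real x * z)))"
    unfolding eq using i1 i2 by (rule Bochner_Integration.integrable_add)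
  show "(\<integral>x. rhoF a t \<mu> x *\<^sub>R exp (- (complex_of_real x * z)) \<partial>lborel)
      = (a / t) *\<^sub>R ((1 - exp (- (complex_of_real t * z))) / z)
        + (1 / t) *\<^sub>R ((1 - exp (- (complex_of_real t * z))) / z * (\<integral>s. (1 - exp (- (complex_of_real s * z))) \<partial>\<mu>))"
    unfolding eq Bochner_Integration.integral_add[OF i1 i2] integral_scaleR_right A(2) K(2) by simp
qed

lemma g_laplace:
  fixes z :: complex
  assumes z: "0 < Re z"
  shows "integrable (NN t) (\<lambda>s. exp (- (complex_of_real s * z)) * gN a b t \<mu> s)"
    "(\<integral>s. exp (- (complex_of_real s * z)) * gN a b t \<mu> s \<partial>NN t) = Cfun t z * bernstein a b \<mu> z"
proof -
  have z0: "z \<noteq> 0" using z by auto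
  note R = rho_laplace[OF z]
  define \<phi> where "\<phi> s = exp (- (complex_of_real s * z)) * gN a b t \<mu> s" for s
  have em: "(\<lambda>x::real. exp (- (complex_of_real x * z))) \<in> borel_measurable borel"
    by (intro borel_measurable_continuous_onI continuous_intros)
  have \<phi>m: "\<phi> \<in> borel_measurable borel" unfolding \<phi>_def using em by measurable
  have m1: "(\<lambda>x. exponential_density 1 x *\<^sub>R \<phi> x) \<in> borel_measurable lborel"
    unfolding meas_cong_borel[OF sets_lborel] exponential_density_def using \<phi>m by measurable
  have m2: "(\<lambda>x. rhoF a t \<mu> x *\<^sub>R exp (- (complex_of_real x * z))) \<in> borel_measurable lborel"
    unfolding meas_cong_borel[OF sets_lborel] using em by measurable
  have AEe: "AE x in lborel. exponential_density 1 x *\<^sub>R \<phi> x = rhoF a t \<mu> x *\<^sub>R exp (- (complex_of_real x * z))"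
    using AE_not2 by eventually_elim (simp add: \<phi>_def g_pointwise[where h="\<lambda>x. exp (- (complex_of_real x * z))"])
  have iphi: "integrable lborel (\<lambda>x. exponential_density 1 x *\<^sub>R \<phi> x)"
    using R(1) by (subst integrable_cong_AE[OF m1 m2 AEe])
  note NI = NN_integral[OF t \<phi>m iphi]
  show "integrable (NN t) (\<lambda>s. exp (- (complex_of_real s * z)) * gN a b t \<mu> s)"
    using NI(1) unfolding \<phi>_def .
  have "(\<integral>s. exp (- (complex_of_real s * z)) * gN a b t \<mu> s \<partial>NN t)
      = \<phi> 0 + \<phi> t + (\<integral>x. rhoF a t \<mu> x *\<^sub>R exp (- (complex_of_real x * z)) \<partial>lborel)"
    using NI(2) integral_cong_AE[OF m1 m2 AEe] unfolding \<phi>_def by simp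
  also have "\<dots> = Cfun t z * bernstein a b \<mu> z"
    unfolding R(2) \<phi>_def Cfun_def bernstein_def using t z0
    by (simp add: gN_def scaleR_conv_of_real field_simps)
  finally show "(\<integral>s. exp (- (complex_of_real s * z)) * gN a b t \<mu> s \<partial>NN t) = Cfun t z * bernstein a b \<mu> z" .
qed

lemma g_int: "integrable (NN t) (gN a b t \<mu>)"
proof -
  have gm: "gN a b t \<mu> \<in> borel_measurable borel" by simp
  have m1: "(\<lambda>x. exponential_density 1 x *\<^sub>R gN a b t \<mu> x) \<in> borel_measurable lborel"
    unfolding meas_cong_borel[OF sets_lborel] exponential_density_def by measurable
  have m2: "(\<lambda>x. complex_of_real (rhoF a t \<mu> x)) \<in> borel_measurable lborel"
    unfolding meas_cong_borel[OF sets_lborel] by measurable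
  have AEe: "AE x in lborel. exponential_density 1 x *\<^sub>R gN a b t \<mu> x = complex_of_real (rhoF a t \<mu> x)"
    using AE_not2 by eventually_elim (use g_pointwise[where h="\<lambda>_. 1"] in \<open>auto simp: scaleR_conv_of_real\<close>)
  have "integrable lborel (\<lambda>x. exponential_density 1 x *\<^sub>R gN a b t \<mu> x)"
    using rho_int by (subst integrable_cong_AE[OF m1 m2 AEe]) auto
  from NN_integral(1)[OF t gm this] show ?thesis .
qed

lemma rho_abs: "\<bar>rhoF a t \<mu> x\<bar> = (a * indicator {0..t} x + \<bar>kint \<mu> t x\<bar>) / t"
proof (cases "x \<le> t")
  case True
  have "0 \<le> kint \<mu> t x" unfolding kint_def using kern_nonneg[OF True]
    by (intro Bochner_Integration.integral_nonneg) auto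
  thus ?thesis unfolding rhoF_def using a t by simp
next
  case False
  thus ?thesis unfolding rhoF_def using t by (simp add: abs_div)
qed

lemma rho_abs_int: "(\<integral>x. \<bar>rhoF a t \<mu> x\<bar> \<partial>lborel) = a + 2 * (\<integral>s. min (s / t) 1 \<partial>\<mu>)"
proof -
  have ik: "integrable lborel (\<lambda>x. \<bar>kint \<mu> t x\<bar>)" using kint_int[OF L t] by simp
  have ii: "integrable lborel (\<lambda>x. a * indicator {0..t} x :: real)"
    by (intro integrable_mult_right integrable_real_indicator) (use t in auto)
  have "(\<integral>x. \<bar>rhoF a t \<mu> x\<bar> \<partial>lborel) = (\<integral>x. (a * indicator {0..t} x + \<bar>kint \<mu> t x\<bar>) \<partial>lborel) / t"
    unfolding rho_abs by simp
  also have "\<dots> = (a * t + 2 * t * (\<integral>s. min (s / t) 1 \<partial>\<mu>)) / t"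
    using ii ik t kabs_fub(2)[OF L t] by (simp add: kint_abs[OF L t])
  also have "\<dots> = a + 2 * (\<integral>s. min (s / t) 1 \<partial>\<mu>)" using t by (simp add: field_simps)
  finally show ?thesis .
qed

lemma g_tv: "total_variation (NN t) (gN a b t \<mu>) = 2 * rate a b \<mu> t"
proof -
  have gm: "(\<lambda>s. norm (gN a b t \<mu> s)) \<in> borel_measurable borel" by simp
  have m1: "(\<lambda>x. exponential_density 1 x *\<^sub>R norm (gN a b t \<mu> x)) \<in> borel_measurable lborel"
    unfolding meas_cong_borel[OF sets_lborel] exponential_density_def by measurable
  have m2: "(\<lambda>x. \<bar>rhoF a t \<mu> x\<bar>) \<in> borel_measurable lborel"
    unfolding meas_cong_borel[OF sets_lborel] by measurable
  have AEe: "AE x in lborel. exponential_density 1 x *\<^sub>R norm (gN a b t \<mu> x) = \<bar>rhoF a t \<mu> x\<bar>"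
    using AE_not2 by eventually_elim (rule g_pointwise_norm, auto)
  have "integrable lborel (\<lambda>x. exponential_density 1 x *\<^sub>R norm (gN a b t \<mu> x))"
    using rho_int by (subst integrable_cong_AE[OF m1 m2 AEe]) auto
  note NI = NN_integral[OF t gm this]
  have "total_variation (NN t) (gN a b t \<mu>) = norm (gN a b t \<mu> 0) + norm (gN a b t \<mu> t) + (\<integral>x. \<bar>rhoF a t \<mu> x\<bar> \<partial>lborel)"
    unfolding total_variation_def NI(2) using integral_cong_AE[OF m1 m2 AEe] by simp
  also have "\<dots> = b / t + b / t + a + 2 * (\<integral>s. min (s / t) 1 \<partial>\<mu>)"
    unfolding rho_abs_int using t b by (simp add: gN_def norm_divide)
  also have "\<dots> = 2 * rate a b \<mu> t" unfolding rate_def by simp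
  finally show ?thesis .
qed

lemma g_repr: "laplace_repr (NN t) (gN a b t \<mu>) (\<lambda>z. Cfun t z * bernstein a b \<mu> z)"
  unfolding laplace_repr_def
  using NN_finite[of t] NN_neg[OF t] g_int g_laplace(2) by simp

end

theorem theorem3p1:
  fixes a b t :: real and \<mu> :: "real measure"
  assumes "0 \<le> a" and "0 \<le> b" and "levy_measure \<mu>" and "0 < t"
  shows "(\<exists>M f. laplace_repr M f (\<lambda>z. Cfun t z * bernstein a b \<mu> z))
    \<and> (\<forall>M f. laplace_repr M f (\<lambda>z. Cfun t z * bernstein a b \<mu> z)
          \<longrightarrow> total_variation M f = 2 * rate a b \<mu> t)"
proof
  have R: "laplace_repr (NN t) (gN a b t \<mu>) (\<lambda>z. Cfun t z * bernstein a b \<mu> z)"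
    using g_repr[OF assms(3) assms(4) assms(1) assms(2)] .
  show "\<exists>M f. laplace_repr M f (\<lambda>z. Cfun t z * bernstein a b \<mu> z)" using R by blast
  show "\<forall>M f. laplace_repr M f (\<lambda>z. Cfun t z * bernstein a b \<mu> z)
          \<longrightarrow> total_variation M f = 2 * rate a b \<mu> t"
  proof (intro allI impI)
    fix M f assume "laplace_repr M f (\<lambda>z. Cfun t z * bernstein a b \<mu> z)"
    hence "total_variation M f = total_variation (NN t) (gN a b t \<mu>)"
      using tv_unique R by blast
    also have "\<dots> = 2 * rate a b \<mu> t"
      using g_tv[OF assms(3) assms(4) assms(1) assms(2)] .
    finally show "total_variation M f = 2 * rate a b \<mu> t" .
  qed
qed

end
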